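(* Let $(y_1,x_1),\dots,(y_\ell,x_\ell)\in\mathbb{R}^3\times\mathbb{R}^3$, $c_1^2,\dots,c_\ell^2\ge0$, and $k^*\in\{0,\dots,\ell\}$. Suppose (TLS-Q) preserves all inliers $Q_1,\dots,Q_{k^*}$ and rejects all outliers $Q_{k^*+1},\dots,Q_\ell$, in the sense that there is a global minimizer $\hat w_0\in\mathbb{S}^3$ of (TLS-Q) with $\hat w_0^\top Q_i\hat w_0\le c_i^2$ for $i\le k^*$ and $\hat w_0^\top Q_j\hat w_0\ge c_j^2$ for $j>k^*$. Then (SDR) is tight if and only if there exist $\hat\mu\in\mathbb{R}$ and an admissible dual matrix $\hat{\mathcal{D}}$ satisfying: (O1) $\big(2[\hat{\mathcal{D}}]_{0i}+Q_i-c_i^2I_4\big)\hat w_0=0$ for all $i\in\{1,\dots,k^*\}$, and $\big(2[\hat{\mathcal{D}}]_{0j}+c_j^2I_4-Q_j\big)\hat w_0=0$ for all $j\in\{k^*+1,\dots,\ell\}$; (O2) $-\hat\mu\|z_0\|_2^2+2\sum_{i=1}^\ell z_i^\top[\hat{\mathcal{D}}]_{0i}z_i-\sum_{i=1}^\ell z_0^\top\big(2[\hat{\mathcal{D}}]_{0i}-Q_i+c_i^2I_4\big)z_i\ge0$ for all $z_0,\dots,z_\ell\in\mathbb{R}^4$; (O3) $\hat\mu=\sum_{i=1}^{k^*}\big(\hat w_0^\top Q_i\hat w_0-c_i^2\big)$.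
   Context: For $w\in\mathbb{S}^3$, $R(w)\in SO(3)$ is the rotation given by the unit quaternion $w=[w_1;w_2;w_3;w_4]$: $R(w)=\begin{bmatrix} w_1^2+w_2^2-w_3^2-w_4^2 & 2(w_2w_3-w_1w_4) & 2(w_2w_4+w_1w_3)\\ 2(w_2w_3+w_1w_4) & w_1^2+w_3^2-w_2^2-w_4^2 & 2(w_3w_4-w_1w_2)\\ 2(w_2w_4-w_1w_3) & 2(w_3w_4+w_1w_2) & w_1^2+w_4^2-w_2^2-w_3^2\end{bmatrix}$. $Q_i$ is the unique symmetric $4\times4$ matrix with $w^\top Q_iw=\|y_i-R(w)x_i\|_2^2$ for all $w\in\mathbb{S}^3$. (TLS-Q) is $\min_{w_0\in\mathbb{S}^3}\sum_{i=1}^\ell\min\{w_0^\top Q_iw_0,\,c_i^2\}$. For $\mathcal{A}\in\mathbb{R}^{4(\ell+1)\times4(\ell+1)}$, $[\mathcal{A}]_{ij}$ ($0\le i,j\le\ell$) is the $4\times4$ block in rows $4i+1..4i+4$, columns $4j+1..4j+4$. $\mathcal{Q}$ is symmetric with $[\mathcal{Q}]_{0i}=[\mathcal{Q}]_{i0}=\frac12(Q_i-c_i^2I_4)$ ($i\ge1$), other blocks zero. (QCQP): minimize $\operatorname{tr}(\mathcal{Q}\omega\omega^\top)+\sum_ic_i^2$ over $\omega\in\mathbb{R}^{4(\ell+1)}$ s.t. $[\omega\omega^\top]_{0i}=[\omega\omega^\top]_{ii}$ ($i=1..\ell$), $\operatorname{tr}([\omega\omega^\top]_{00})=1$. (SDR):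 minimize $\operatorname{tr}(\mathcal{Q}\mathcal{W})+\sum_ic_i^2$ over symmetric $\mathcal{W}\succeq0$ s.t. $[\mathcal{W}]_{0i}=[\mathcal{W}]_{ii}$ ($i=1..\ell$), $\operatorname{tr}([\mathcal{W}]_{00})=1$. (SDR) is tight if it admits $\hat\omega\hat\omega^\top$ as a global minimizer, where $\hat\omega$ is a global minimizer of (QCQP). An admissible dual matrix is a symmetric $\mathcal{D}\in\mathbb{R}^{4(\ell+1)\times4(\ell+1)}$ with $[\mathcal{D}]_{ii}+2[\mathcal{D}]_{0i}=0$ for $i=1,\dots,\ell$ and all blocks other than $[\mathcal{D}]_{ii},[\mathcal{D}]_{0i},[\mathcal{D}]_{i0}$ ($i\ge1$) equal to zero. *)

theory Defs
  imports "HOL-Analysis.Analysis"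
begin

text \<open>Quaternion components: for w :: real^4 we write w$1, w$2, w$3, w$4
  for w_1..w_4 (in the numeral type 4 the index 4 is the fourth element).\<close>

definition rotq :: "real^4 \<Rightarrow> real^3^3" where
  "rotq w = vector [
     vector [(w$1)^2 + (w$2)^2 - (w$3)^2 - (w$4)^2, 2*(w$2*w$3 - w$1*w$4), 2*(w$2*w$4 + w$1*w$3)],
     vector [2*(w$2*w$3 + w$1*w$4), (w$1)^2 + (w$3)^2 - (w$2)^2 - (w$4)^2, 2*(w$3*w$4 - w$1*w$2)],
     vector [2*(w$2*w$4 - w$1*w$3), 2*(w$3*w$4 + w$1*w$2), (w$1)^2 + (w$4)^2 - (w$2)^2 - (w$3)^2]]"

definition Qmat :: "real^3 \<Rightarrow> real^3 \<Rightarrow> real^4^4" where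
  "Qmat y x = (THE Q. transpose Q = Q \<and>
      (\<forall>w::real^4. norm w = 1 \<longrightarrow> w \<bullet> (Q *v w) = (norm (y - rotq w *v x))^2))"

definition tls_obj :: "nat \<Rightarrow> (nat \<Rightarrow> real^3) \<Rightarrow> (nat \<Rightarrow> real^3) \<Rightarrow> (nat \<Rightarrow> real) \<Rightarrow> real^4 \<Rightarrow> real" where
  "tls_obj l y x c2 w = (\<Sum>i=1..l. min (w \<bullet> (Qmat (y i) (x i) *v w)) (c2 i))"

definition tls_global_min :: "nat \<Rightarrow> (nat \<Rightarrow> real^3) \<Rightarrow> (nat \<Rightarrow> real^3) \<Rightarrow> (nat \<Rightarrow> real) \<Rightarrow> real^4 \<Rightarrow> bool" where
  "tls_global_min l y x c2 w0 \<longleftrightarrow> norm w0 = 1 \<and>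
     (\<forall>w. norm w = 1 \<longrightarrow> tls_obj l y x c2 w0 \<le> tls_obj l y x c2 w)"

text \<open>A 4(l+1) x 4(l+1) matrix is represented by its 4x4 blocks
  A i j (0 \<le> i, j \<le> l); a vector in R^{4(l+1)} by its 4-blocks z 0, ..., z l.
  Values outside the index range 0..l are irrelevant.\<close>

definition block_sym :: "nat \<Rightarrow> (nat \<Rightarrow> nat \<Rightarrow> real^4^4) \<Rightarrow> bool" where
  "block_sym l A \<longleftrightarrow> (\<forall>i\<le>l. \<forall>j\<le>l. A j i = transpose (A i j))"

definition block_psd :: "nat \<Rightarrow> (nat \<Rightarrow> nat \<Rightarrow> real^4^4) \<Rightarrow> bool" where
  "block_psd l A \<longleftrightarrow> block_sym l A \<and>
     (\<forall>z :: nat \<Rightarrow> real^4. 0 \<le> (\<Sum>i\<le>l. \<Sum>j\<le>l. z i \<bullet> (A i j *v z j)))"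

definition block_trprod :: "nat \<Rightarrow> (nat \<Rightarrow> nat \<Rightarrow> real^4^4) \<Rightarrow> (nat \<Rightarrow> nat \<Rightarrow> real^4^4) \<Rightarrow> real" where
  "block_trprod l A B = (\<Sum>i\<le>l. \<Sum>j\<le>l. trace (A i j ** B j i))"

definition outer_blocks :: "(nat \<Rightarrow> real^4) \<Rightarrow> nat \<Rightarrow> nat \<Rightarrow> real^4^4" where
  "outer_blocks om i j = (\<chi> a b. om i $ a * om j $ b)"

definition bigQ :: "nat \<Rightarrow> (nat \<Rightarrow> real^3) \<Rightarrow> (nat \<Rightarrow> real^3) \<Rightarrow> (nat \<Rightarrow> real) \<Rightarrow> nat \<Rightarrow> nat \<Rightarrow> real^4^4" where
  "bigQ l y x c2 i j =
     (if i = 0 \<and> 1 \<le> j \<and> j \<le> l then (1/2) *\<^sub>R (Qmat (y j) (x j) - c2 j *\<^sub>R mat 1)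
      else if j = 0 \<and> 1 \<le> i \<and> i \<le> l then (1/2) *\<^sub>R (Qmat (y i) (x i) - c2 i *\<^sub>R mat 1)
      else 0)"

definition relax_obj :: "nat \<Rightarrow> (nat \<Rightarrow> real^3) \<Rightarrow> (nat \<Rightarrow> real^3) \<Rightarrow> (nat \<Rightarrow> real) \<Rightarrow> (nat \<Rightarrow> nat \<Rightarrow> real^4^4) \<Rightarrow> real" where
  "relax_obj l y x c2 W = block_trprod l (bigQ l y x c2) W + (\<Sum>i=1..l. c2 i)"

definition qcqp_feasible :: "nat \<Rightarrow> (nat \<Rightarrow> real^4) \<Rightarrow> bool" where
  "qcqp_feasible l om \<longleftrightarrow>
     (\<forall>i\<in>{1..l}. outer_blocks om 0 i = outer_blocks om i i) \<and> trace (outer_blocks om 0 0) = 1"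

definition qcqp_global_min :: "nat \<Rightarrow> (nat \<Rightarrow> real^3) \<Rightarrow> (nat \<Rightarrow> real^3) \<Rightarrow> (nat \<Rightarrow> real) \<Rightarrow> (nat \<Rightarrow> real^4) \<Rightarrow> bool" where
  "qcqp_global_min l y x c2 om \<longleftrightarrow> qcqp_feasible l om \<and>
     (\<forall>om'. qcqp_feasible l om' \<longrightarrow>
        relax_obj l y x c2 (outer_blocks om) \<le> relax_obj l y x c2 (outer_blocks om'))"

definition sdr_feasible :: "nat \<Rightarrow> (nat \<Rightarrow> nat \<Rightarrow> real^4^4) \<Rightarrow> bool" where
  "sdr_feasible l W \<longleftrightarrow> block_psd l W \<and>
     (\<forall>i\<in>{1..l}. W 0 i = W i i) \<and> trace (W 0 0) = 1"

definition sdr_global_min :: "nat \<Rightarrow> (nat \<Rightarrow> real^3) \<Rightarrow> (nat \<Rightarrow> real^3) \<Rightarrow> (nat \<Rightarrow> real) \<Rightarrow> (nat \<Rightarrow> nat \<Rightarrow> real^4^4) \<Rightarrow> bool" where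
  "sdr_global_min l y x c2 W \<longleftrightarrow> sdr_feasible l W \<and>
     (\<forall>W'. sdr_feasible l W' \<longrightarrow> relax_obj l y x c2 W \<le> relax_obj l y x c2 W')"

definition sdr_tight :: "nat \<Rightarrow> (nat \<Rightarrow> real^3) \<Rightarrow> (nat \<Rightarrow> real^3) \<Rightarrow> (nat \<Rightarrow> real) \<Rightarrow> bool" where
  "sdr_tight l y x c2 \<longleftrightarrow>
     (\<exists>om. qcqp_global_min l y x c2 om \<and> sdr_global_min l y x c2 (outer_blocks om))"

definition admissible_dual :: "nat \<Rightarrow> (nat \<Rightarrow> nat \<Rightarrow> real^4^4) \<Rightarrow> bool" where
  "admissible_dual l D \<longleftrightarrow> block_sym l D \<and>
     (\<forall>i\<in>{1..l}. D i i + 2 *\<^sub>R D 0 i = 0) \<and>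
     (\<forall>i\<le>l. \<forall>j\<le>l. \<not> (1 \<le> i \<and> (j = i \<or> j = 0)) \<and> \<not> (i = 0 \<and> 1 \<le> j) \<longrightarrow> D i j = 0)"

end

theory Submission
  imports Defs
begin

lemma vector_4 [simp]:
 "(vector [a,b,c,d] ::('a::zero)^4)$1 = a"
 "(vector [a,b,c,d] ::('a::zero)^4)$2 = b"
 "(vector [a,b,c,d] ::('a::zero)^4)$3 = c"
 "(vector [a,b,c,d] ::('a::zero)^4)$4 = d"
  unfolding vector_def by simp_all

definition Mq :: "real^3 \<Rightarrow> real^3 \<Rightarrow> real^4^4" where
  "Mq y x = vector [
    vector [y$1*x$1+y$2*x$2+y$3*x$3, y$3*x$2 - y$2*x$3, y$1*x$3 - y$3*x$1, y$2*x$1 - y$1*x$2],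
    vector [y$3*x$2 - y$2*x$3, y$1*x$1 - y$2*x$2 - y$3*x$3, y$1*x$2 + y$2*x$1, y$1*x$3 + y$3*x$1],
    vector [y$1*x$3 - y$3*x$1, y$1*x$2 + y$2*x$1, - y$1*x$1 + y$2*x$2 - y$3*x$3, y$2*x$3 + y$3*x$2],
    vector [y$2*x$1 - y$1*x$2, y$1*x$3 + y$3*x$1, y$2*x$3 + y$3*x$2, - y$1*x$1 - y$2*x$2 + y$3*x$3]]"

definition Q0 :: "real^3 \<Rightarrow> real^3 \<Rightarrow> real^4^4" where
  "Q0 y x = ((norm y)^2 + (norm x)^2) *\<^sub>R mat 1 - 2 *\<^sub>R Mq y x"

lemma Q0_sym: "transpose (Q0 y x) = Q0 y x"
  unfolding Q0_def Mq_def
  by (simp add: vec_eq_iff forall_4 transpose_def mat_def)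

lemma Q0_prop:
  assumes "norm w = 1"
  shows "w \<bullet> (Q0 y x *v w) = (norm (y - rotq w *v x))^2"
proof -
  have s: "(w$1)^2 + (w$2)^2 + (w$3)^2 + (w$4)^2 = 1"
    using assms by (simp add: norm_eq_1 inner_vec_def sum_4 power2_eq_square)
  have ny: "(norm y)^2 = (y$1)^2 + (y$2)^2 + (y$3)^2"
    by (simp only: power2_norm_eq_inner) (simp add: inner_vec_def sum_3 power2_eq_square)
  have nx: "(norm x)^2 = (x$1)^2 + (x$2)^2 + (x$3)^2"
    by (simp only: power2_norm_eq_inner) (simp add: inner_vec_def sum_3 power2_eq_square)
  have e: "(norm (y - rotq w *v x))^2 = (y$1 - (rotq w *v x)$1)^2 + (y$2 - (rotq w *v x)$2)^2 + (y$3 - (rotq w *v x)$3)^2"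
    by (simp only: power2_norm_eq_inner) (simp add: inner_vec_def sum_3 power2_eq_square)
  let ?s = "(w$1)^2 + (w$2)^2 + (w$3)^2 + (w$4)^2"
  have "w \<bullet> (Q0 y x *v w) - (norm (y - rotq w *v x))^2
     = ((y$1)^2 + (y$2)^2 + (y$3)^2) * (?s - 1) + ((x$1)^2 + (x$2)^2 + (x$3)^2) * (?s - ?s^2)"
    unfolding e Q0_def ny nx
    by (simp add: Mq_def rotq_def inner_vec_def sum_4 sum_3 matrix_vector_mult_def mat_def algebra_simps power2_eq_square)
  then show ?thesis using s by simp
qed

lemma transpose_diff: "transpose (A - B) = transpose A - transpose (B::'a::ab_group_add^'n^'m)"
  by (simp add: transpose_def vec_eq_iff)
lemma transpose_add: "transpose (A + B) = transpose A + transpose (B::'a::ab_group_add^'n^'m)"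
  by (simp add: transpose_def vec_eq_iff)
lemma transpose_zero[simp]: "transpose (0::'a::zero^'n^'m) = 0"
  by (simp add: transpose_def vec_eq_iff)

lemma quad_eq_imp_eq:
  fixes A B :: "real^4^4"
  assumes sA: "transpose A = A" and sB: "transpose B = B"
    and eq: "\<forall>w. norm w = 1 \<longrightarrow> w \<bullet> (A *v w) = w \<bullet> (B *v w)"
  shows "A = B"
proof -
  define C where "C = A - B"
  have sC: "transpose C = C" using sA sB by (simp add: C_def transpose_diff)
  have q1: "w \<bullet> (C *v w) = 0" if "norm w = 1" for w
    using eq that by (simp add: C_def matrix_vector_mult_diff_rdistrib inner_diff_right)
  have q: "w \<bullet> (C *v w) = 0" for w
  proof (cases "w = 0")
    case True then show ?thesis by simp
  next
    case False
    then have "norm (w /\<^sub>R norm w) = 1" by simp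
    from q1[OF this] have "(w /\<^sub>R norm w) \<bullet> (C *v (w /\<^sub>R norm w)) = 0" .
    then show ?thesis using False
      by (simp add: matrix_vector_mult_scaleR inner_scaleR_left inner_scaleR_right)
  qed
  have symC: "u \<bullet> (C *v v) = v \<bullet> (C *v u)" for u v
    by (metis sC dot_lmul_matrix inner_commute vector_transpose_matrix)
  have b: "u \<bullet> (C *v v) = 0" for u v
  proof -
    have "(u + v) \<bullet> (C *v (u + v)) = u \<bullet> (C *v u) + u \<bullet> (C *v v) + v \<bullet> (C *v u) + v \<bullet> (C *v v)"
      by (simp add: matrix_vector_right_distrib inner_add_left inner_add_right)
    then show ?thesis using q[of "u+v"] q[of u] q[of v] symC[of u v] by simp
  qed
  have "C *v v = 0" for v using b[of "C *v v" v] by simp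
  then have "C = 0"
    by (metis matrix_vector_mul_lid matrix_eq matrix_vector_mult_0)
  then show ?thesis by (simp add: C_def)
qed

lemma Qmat_eq: "Qmat y x = Q0 y x"
  unfolding Qmat_def
proof (rule the_equality)
  show "transpose (Q0 y x) = Q0 y x \<and> (\<forall>w. norm w = 1 \<longrightarrow> w \<bullet> (Q0 y x *v w) = (norm (y - rotq w *v x))\<^sup>2)"
    using Q0_sym Q0_prop by blast
next
  fix Q :: "real^4^4"
  assume "transpose Q = Q \<and> (\<forall>w. norm w = 1 \<longrightarrow> w \<bullet> (Q *v w) = (norm (y - rotq w *v x))\<^sup>2)"
  then show "Q = Q0 y x"
    using quad_eq_imp_eq[of Q "Q0 y x"] Q0_sym Q0_prop by auto
qed

lemma Qmat_sym: "transpose (Qmat y x) = Qmat y x"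
  using Qmat_eq Q0_sym by simp

definition psd4 :: "real^4^4 \<Rightarrow> bool" where
  "psd4 M \<longleftrightarrow> transpose M = M \<and> (\<forall>v. 0 \<le> v \<bullet> (M *v v))"

lemma sym_bilin: "transpose M = M \<Longrightarrow> u \<bullet> (M *v v) = v \<bullet> (M *v (u::real^'n))"
  by (metis dot_lmul_matrix inner_commute vector_transpose_matrix)

lemma quad_expand:
  "(u + t *\<^sub>R v) \<bullet> (M *v (u + t *\<^sub>R v)) = u \<bullet> (M *v u) + t * (u \<bullet> (M *v v) + v \<bullet> (M *v u)) + t^2 * (v \<bullet> (M *v v))"
  for M :: "real^'n^'n"
  by (simp add: matrix_vector_right_distrib matrix_vector_mult_scaleR inner_add_left inner_add_right
      algebra_simps power2_eq_square)

lemma psd_CS: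
  assumes "psd4 M"
  shows "(u \<bullet> (M *v v))^2 \<le> (u \<bullet> (M *v u)) * (v \<bullet> (M *v v))"
proof -
  have sym: "v \<bullet> (M *v u) = u \<bullet> (M *v v)" using assms sym_bilin unfolding psd4_def by metis
  have nn: "0 \<le> (u + t *\<^sub>R v) \<bullet> (M *v (u + t *\<^sub>R v))" for t
    using assms unfolding psd4_def by blast
  have q: "0 \<le> u \<bullet> (M *v u) + 2 * t * (u \<bullet> (M *v v)) + t^2 * (v \<bullet> (M *v v))" for t
    using nn[of t] unfolding quad_expand sym by (simp add: algebra_simps)
  define a where "a = v \<bullet> (M *v v)"
  define b where "b = u \<bullet> (M *v v)"
  define c where "c = u \<bullet> (M *v u)"
  have q': "0 \<le> c + 2 * t * b + t^2 * a" for t using q[of t] by (simp add: a_def b_def c_def)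
  have a0: "0 \<le> a" using assms unfolding psd4_def a_def by blast
  show ?thesis
  proof (cases "a = 0")
    case True
    have "b = 0"
    proof (rule ccontr)
      assume "b \<noteq> 0"
      have "0 \<le> c + 2 * (- (c + 1) / (2 * b)) * b" using q'[of "- (c + 1) / (2*b)"] True by simp
      also have "\<dots> = -1" using \<open>b \<noteq> 0\<close> by (simp add: field_simps)
      finally show False by simp
    qed
    then show ?thesis using True by (simp add: a_def b_def)
  next
    case False
    then have apos: "0 < a" using a0 by simp
    have "0 \<le> c + 2 * (- b / a) * b + (- b / a)^2 * a" using q'[of "- b / a"] .
    also have "\<dots> = c - b^2 / a" using apos by (simp add: field_simps power2_eq_square)
    finally have "b^2 / a \<le> c" by simp
    then have "b^2 \<le> c * a" using apos by (simp add: field_simps)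
    then show ?thesis by (simp add: a_def b_def c_def)
  qed
qed

lemma psd_zero_quad:
  assumes "psd4 M" "v \<bullet> (M *v v) = 0"
  shows "M *v v = 0"
proof -
  have "(u \<bullet> (M *v v))^2 \<le> 0" for u using psd_CS[OF assms(1), of u v] assms(2) by simp
  then have "u \<bullet> (M *v v) = 0" for u by (meson power2_less_eq_zero_iff)
  then show ?thesis using inner_eq_zero_iff by blast
qed

definition outerv :: "real^4 \<Rightarrow> real^4 \<Rightarrow> real^4^4" where
  "outerv u v = (\<chi> a b. u $ a * v $ b)"

lemma inner_mat: "inner (A::real^'n^'m) B = (\<Sum>p\<in>UNIV. \<Sum>q\<in>UNIV. A$p$q * B$p$q)"
  by (simp add: inner_vec_def)

lemma inner_outerv: "inner M (outerv v v) = v \<bullet> (M *v v)"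
  by (simp add: inner_mat outerv_def inner_vec_def matrix_vector_mult_def sum_distrib_left
      algebra_simps)

lemma psd4_outerv: "psd4 (outerv v v)"
proof -
  have "u \<bullet> (outerv v v *v u) = (v \<bullet> u)^2" for u
    by (simp add: outerv_def inner_vec_def matrix_vector_mult_def power2_eq_square sum_distrib_left
        sum_distrib_right algebra_simps)
  then show ?thesis unfolding psd4_def
    by (simp add: outerv_def transpose_def vec_eq_iff mult.commute)
qed

lemma closed_psd4: "closed {M. psd4 M}"
proof -
  have "{M. psd4 M} = {M. transpose M = M} \<inter> (\<Inter>v. {M. 0 \<le> v \<bullet> (M *v v)})"
    unfolding psd4_def by auto
  moreover have "closed {M::real^4^4. transpose M = M}"
  proof -
    have "{M::real^4^4. transpose M = M} = (\<Inter>p. \<Inter>q. {M. M$q$p = M$p$q})"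
      by (auto simp: transpose_def vec_eq_iff)
    moreover have "closed {M::real^4^4. M$q$p = M$p$q}" for p q
      by (intro closed_Collect_eq continuous_intros)
    ultimately show ?thesis by (auto intro!: closed_INT)
  qed
  moreover have "closed {M::real^4^4. 0 \<le> v \<bullet> (M *v v)}" for v
  proof -
    have "{M::real^4^4. 0 \<le> v \<bullet> (M *v v)} = {M. 0 \<le> inner M (outerv v v)}"
      by (simp add: inner_outerv)
    moreover have "closed {M::real^4^4. 0 \<le> inner M (outerv v v)}"
      by (intro closed_Collect_le continuous_intros)
    ultimately show ?thesis by simp
  qed
  ultimately show ?thesis by (auto intro!: closed_INT closed_Int)
qed

lemma psd4_add: "psd4 A \<Longrightarrow> psd4 B \<Longrightarrow> psd4 (A + B)"
  unfolding psd4_def by (simp add: transpose_add matrix_vector_mult_add_rdistrib inner_add_right add_nonneg_nonneg)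

lemma psd4_scale: "psd4 A \<Longrightarrow> 0 \<le> c \<Longrightarrow> psd4 (c *\<^sub>R A)"
  unfolding psd4_def by (simp add: transpose_scalar scaleR_matrix_vector_assoc[symmetric])

lemma psd4_0: "psd4 0"
  unfolding psd4_def by simp

lemma convex_psd4: "convex {M. psd4 M}"
  unfolding convex_def
  by (auto intro!: psd4_add psd4_scale)

lemma trace_inner: "trace (A::real^'n^'n) = inner A (mat 1)"
  by (simp add: trace_def inner_mat mat_def if_distrib sum.delta cong: if_cong)

lemma basis_quad: "(axis p 1 :: real^'n) \<bullet> (M *v axis p 1) = M$p$p"
  by (simp add: inner_axis' matrix_vector_mult_basis column_def)

lemma basis_bilin: "(axis p 1 :: real^'n) \<bullet> (M *v axis q 1) = M$p$q"
  by (simp add: inner_axis' matrix_vector_mult_basis column_def)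

lemma psd4_diag: "psd4 M \<Longrightarrow> 0 \<le> M$p$p"
  unfolding psd4_def by (metis basis_quad)

lemma psd4_trace: "psd4 M \<Longrightarrow> 0 \<le> trace M"
  unfolding trace_def by (simp add: psd4_diag sum_nonneg)

lemma psd4_entry_bound: "psd4 M \<Longrightarrow> \<bar>M$p$q\<bar> \<le> trace M"
proof -
  assume a: "psd4 M"
  have "(M$p$q)^2 \<le> M$p$p * M$q$q"
    using psd_CS[OF a, of "axis p 1" "axis q 1"] by (simp add: basis_quad basis_bilin)
  moreover have "M$p$p \<le> trace M" "M$q$q \<le> trace M"
    unfolding trace_def using psd4_diag[OF a]
    by (auto intro!: member_le_sum)
  moreover have "0 \<le> M$p$p" "0 \<le> M$q$q" using psd4_diag[OF a] by auto
  ultimately have "(M$p$q)^2 \<le> (trace M)^2"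
    by (smt (verit) mult_mono power2_eq_square)
  then show ?thesis using psd4_trace[OF a] by (metis power2_abs power2_le_imp_le)
qed

lemma psd4_norm_bound: "psd4 M \<Longrightarrow> norm M \<le> 16 * trace M"
proof -
  assume a: "psd4 M"
  have "norm M \<le> (\<Sum>p\<in>UNIV. norm (M$p))" by (simp add: norm_vec_def L2_set_le_sum)
  also have "\<dots> \<le> (\<Sum>p\<in>(UNIV::4 set). \<Sum>q\<in>(UNIV::4 set). \<bar>M$p$q\<bar>)"
    by (intro sum_mono) (simp add: norm_le_l1_cart)
  also have "\<dots> \<le> (\<Sum>p\<in>(UNIV::4 set). \<Sum>q\<in>(UNIV::4 set). trace M)"
    by (intro sum_mono psd4_entry_bound[OF a])
  also have "\<dots> = 16 * trace M" by simp
  finally show ?thesis .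
qed

lemma closed_sum_bounded:
  fixes A B :: "'a::euclidean_space set" and f :: "'a \<Rightarrow> real"
  assumes cA: "closed A" and cB: "closed B" and lf: "linear f"
    and fa: "\<forall>a\<in>A. norm a \<le> f a" and fb: "\<forall>b\<in>B. 0 \<le> f b"
  shows "closed {a + b | a b. a \<in> A \<and> b \<in> B}"
  unfolding closed_sequential_limits
proof (intro allI impI, elim conjE)
  fix s l
  assume sS: "\<forall>n. s n \<in> {a + b |a b. a \<in> A \<and> b \<in> B}" and sl: "s \<longlonglongrightarrow> l"
  from sS have "\<forall>n. \<exists>a b. a \<in> A \<and> b \<in> B \<and> s n = a + b" by blast
  then obtain a b where ab: "\<And>n. a n \<in> A" "\<And>n. b n \<in> B" "\<And>n. s n = a n + b n"
    by metis
  have bl: "bounded_linear f" using lf by (simp add: linear_conv_bounded_linear)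
  have "(\<lambda>n. f (s n)) \<longlonglongrightarrow> f l" using bounded_linear.tendsto[OF bl sl] .
  then have "Bseq (\<lambda>n. f (s n))" by (rule convergent_imp_Bseq[OF convergentI])
  then obtain K where K: "\<And>n. norm (f (s n)) \<le> K" unfolding Bseq_def by auto
  have "norm (a n) \<le> K" for n
  proof -
    have "norm (a n) \<le> f (a n)" using fa ab(1) by blast
    also have "\<dots> \<le> f (a n) + f (b n)" using fb ab(2) by auto
    also have "\<dots> = f (s n)" using ab(3) linear_add[OF lf] by simp
    also have "\<dots> \<le> K" using K[of n] by simp
    finally show ?thesis .
  qed
  then have "bounded (range a)" unfolding bounded_iff by blast
  then obtain a0 r where r: "strict_mono r" and ar: "(a \<circ> r) \<longlonglongrightarrow> a0"
    using bounded_imp_convergent_subsequence by blast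
  have a0A: "a0 \<in> A" using cA ar ab(1) closed_sequentially[of A "a \<circ> r" a0] by auto
  have sr: "(s \<circ> r) \<longlonglongrightarrow> l" using sl r LIMSEQ_subseq_LIMSEQ by blast
  have "(\<lambda>n. (s \<circ> r) n - (a \<circ> r) n) \<longlonglongrightarrow> l - a0" using tendsto_diff[OF sr ar] .
  moreover have "(\<lambda>n. (s \<circ> r) n - (a \<circ> r) n) = b \<circ> r" using ab(3) by (auto simp: fun_eq_iff)
  ultimately have "(b \<circ> r) \<longlonglongrightarrow> l - a0" by simp
  then have "l - a0 \<in> B" using cB ab(2) closed_sequentially[of B "b \<circ> r" "l - a0"] by auto
  then show "l \<in> {a + b |a b. a \<in> A \<and> b \<in> B}" using a0A by (intro CollectI exI[of _ a0] exI[of _ "l - a0"]) auto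
qed

definition Rset :: "real^4^4 \<Rightarrow> (real^4^4) set" where
  "Rset G = {R. psd4 R \<and> psd4 (R + 2 *\<^sub>R G)}"

lemma inner_transpose: "inner (A::real^'n^'m) (transpose B) = inner (transpose A) B"
  by (simp add: inner_mat transpose_def) (rule sum.swap)

lemma quad_transpose: "v \<bullet> (transpose M *v v) = v \<bullet> (M *v (v::real^'n))"
  by (simp add: dot_lmul_matrix[symmetric] inner_commute)

lemma quad_vmul: "v \<bullet> (v v* M) = v \<bullet> (M *v (v::real^'n))"
  by (metis dot_lmul_matrix inner_commute)

lemma abs_quad_le: "\<bar>v \<bullet> (G *v v)\<bar> \<le> (\<Sum>i\<in>UNIV. \<Sum>j\<in>UNIV. \<bar>G $ i $ j\<bar>) * (norm v)^2"
  for G :: "real^4^4"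
proof -
  have "\<bar>v \<bullet> (G *v v)\<bar> \<le> norm v * norm (G *v v)" by (rule Cauchy_Schwarz_ineq2)
  also have "norm (G *v v) \<le> onorm ((*v) G) * norm v"
    by (rule onorm) simp
  also have "onorm ((*v) G) \<le> (\<Sum>i\<in>UNIV. \<Sum>j\<in>UNIV. \<bar>G $ i $ j\<bar>)"
    by (rule onorm_le_matrix_component_sum)
  finally show ?thesis
    by (simp add: power2_eq_square mult_left_mono mult_right_mono mult.assoc mult.left_commute)
qed

lemma psd4_mat1: "psd4 (mat 1)"
  unfolding psd4_def by simp

lemma Rset_nonempty: "transpose G = G \<Longrightarrow> \<exists>R0. R0 \<in> Rset G"
proof -
  assume sG: "transpose G = G"
  define gs where "gs = (\<Sum>i\<in>UNIV. \<Sum>j\<in>UNIV. \<bar>G $ i $ j\<bar>)"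
  have gs0: "0 \<le> gs" unfolding gs_def by (intro sum_nonneg) auto
  define R0 where "R0 = (2 * gs) *\<^sub>R (mat 1 :: real^4^4)"
  have "psd4 R0" unfolding R0_def using gs0 by (intro psd4_scale psd4_mat1) auto
  moreover have "psd4 (R0 + 2 *\<^sub>R G)"
    unfolding psd4_def
  proof
    show "transpose (R0 + 2 *\<^sub>R G) = R0 + 2 *\<^sub>R G"
      by (simp add: R0_def transpose_add transpose_scalar sG)
    show "\<forall>v. 0 \<le> v \<bullet> ((R0 + 2 *\<^sub>R G) *v v)"
    proof
      fix v :: "real^4"
      have "v \<bullet> ((R0 + 2 *\<^sub>R G) *v v) = 2 * (gs * (norm v)^2) + 2 * (v \<bullet> (G *v v))"
        by (simp add: R0_def matrix_vector_mult_add_rdistrib inner_add_right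
            scaleR_matrix_vector_assoc[symmetric] power2_norm_eq_inner)
      moreover have "\<bar>v \<bullet> (G *v v)\<bar> \<le> gs * (norm v)^2" using abs_quad_le unfolding gs_def .
      ultimately show "0 \<le> v \<bullet> ((R0 + 2 *\<^sub>R G) *v v)" by (simp add: abs_le_iff)
    qed
  qed
  ultimately show ?thesis unfolding Rset_def by blast
qed

lemma inner_dual:
  fixes G W :: "real^4^4" and t :: real
  assumes symG: "transpose G = G" and symW: "transpose W = W"
    and bound: "\<forall>R\<in>Rset G. t \<le> inner W R"
  shows "\<exists>Y. psd4 Y \<and> psd4 (W - Y) \<and> 2 * inner G Y \<le> -t"
proof -
  define L2 where "L2 = {p :: (real^4^4) \<times> real. psd4 (fst p) \<and> snd p = 2 * inner G (fst p)}"
  define L13 where "L13 = {M :: real^4^4. psd4 M} \<times> {s::real. 0 \<le> s}"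
  define K where "K = {a + b | a b. a \<in> L2 \<and> b \<in> L13}"
  define Kc where "Kc = 16 * (1 + 2 * norm G)"
  define f where "f = (\<lambda>p::(real^4^4) \<times> real. Kc * inner (fst p) (mat 1))"
  have Kc0: "0 \<le> Kc" unfolding Kc_def by simp
  have lin: "linear f" unfolding f_def
    by (intro linearI) (simp_all add: inner_add_left algebra_simps)
  have cL2: "closed L2"
  proof -
    have "L2 = fst -` {M. psd4 M} \<inter> {p. snd p = 2 * inner G (fst p)}"
      unfolding L2_def by auto
    moreover have "closed (fst -` {M :: real^4^4. psd4 M} :: ((real^4^4) \<times> real) set)"
      by (intro continuous_closed_vimage closed_psd4 continuous_intros)
    moreover have "closed {p :: (real^4^4) \<times> real. snd p = 2 * inner G (fst p)}"
      by (intro closed_Collect_eq continuous_intros)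
    ultimately show ?thesis by auto
  qed
  have cL13: "closed L13" unfolding L13_def
    by (intro closed_Times closed_psd4) (simp add: closed_Collect_le)
  have fL2: "\<forall>a\<in>L2. norm a \<le> f a"
  proof
    fix a assume "a \<in> L2"
    then obtain Y s where a: "a = (Y, s)" "psd4 Y" "s = 2 * inner G Y" unfolding L2_def
      by (cases a) auto
    have "norm a \<le> norm Y + norm s" unfolding a(1) by (rule norm_Pair_le)
    also have "norm s \<le> 2 * (norm G * norm Y)" using a(3) Cauchy_Schwarz_ineq2[of G Y] by simp
    also have "norm Y + 2 * (norm G * norm Y) = (1 + 2 * norm G) * norm Y" by (simp add: algebra_simps)
    also have "\<dots> \<le> (1 + 2 * norm G) * (16 * trace Y)"
      using psd4_norm_bound[OF a(2)] by (intro mult_left_mono) auto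
    also have "\<dots> = f a" unfolding f_def a(1) Kc_def by (simp add: trace_inner)
    finally show "norm a \<le> f a" by simp
  qed
  have fL13: "\<forall>b\<in>L13. 0 \<le> f b"
    unfolding L13_def f_def using Kc0 psd4_trace by (auto simp: trace_inner[symmetric])
  have cK: "closed K" unfolding K_def by (rule closed_sum_bounded[OF cL2 cL13 lin fL2 fL13])
  have convL2: "convex L2" unfolding L2_def convex_def
    by (auto intro!: psd4_add psd4_scale simp: inner_add_right algebra_simps)
  have convL13: "convex L13" unfolding L13_def
    by (intro convex_Times convex_psd4) (simp add: convex_def)
  have cvK: "convex K" unfolding K_def convex_def
  proof (intro ballI allI impI)
    fix x y :: "(real^4^4) \<times> real" and u v :: real
    assume "x \<in> {a + b |a b. a \<in> L2 \<and> b \<in> L13}" "y \<in> {a + b |a b. a \<in> L2 \<and> b \<in> L13}"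
      "0 \<le> u" "0 \<le> v" "u + v = 1"
    then obtain a1 b1 a2 b2 where x: "x = a1 + b1" "a1 \<in> L2" "b1 \<in> L13"
      and y: "y = a2 + b2" "a2 \<in> L2" "b2 \<in> L13" by blast
    have "u *\<^sub>R x + v *\<^sub>R y = (u *\<^sub>R a1 + v *\<^sub>R a2) + (u *\<^sub>R b1 + v *\<^sub>R b2)"
      unfolding x y by (simp add: algebra_simps)
    moreover have "u *\<^sub>R a1 + v *\<^sub>R a2 \<in> L2"
      using convL2 x(2) y(2) \<open>0 \<le> u\<close> \<open>0 \<le> v\<close> \<open>u + v = 1\<close> unfolding convex_def by blast
    moreover have "u *\<^sub>R b1 + v *\<^sub>R b2 \<in> L13"
      using convL13 x(3) y(3) \<open>0 \<le> u\<close> \<open>0 \<le> v\<close> \<open>u + v = 1\<close> unfolding convex_def by blast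
    ultimately show "u *\<^sub>R x + v *\<^sub>R y \<in> {a + b |a b. a \<in> L2 \<and> b \<in> L13}" by blast
  qed
  have L2_0: "(0, 0) \<in> L2" unfolding L2_def by (simp add: psd4_0)
  have L13_0: "(0, 0) \<in> L13" unfolding L13_def by (simp add: psd4_0)
  have memK: "a + b \<in> K" if "a \<in> L2" "b \<in> L13" for a b
    unfolding K_def using that by blast
  have K0: "0 \<in> K" using memK[OF L2_0 L13_0] by (simp add: zero_prod_def)
  have Kscale: "c *\<^sub>R x \<in> K" if "x \<in> K" "0 \<le> c" for x c
  proof -
    obtain a b where "x = a + b" "a \<in> L2" "b \<in> L13" using \<open>x \<in> K\<close> unfolding K_def by blast
    moreover have "c *\<^sub>R a \<in> L2" using \<open>a \<in> L2\<close> that(2) unfolding L2_def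
      by (auto intro!: psd4_scale)
    moreover have "c *\<^sub>R b \<in> L13" using \<open>b \<in> L13\<close> that(2) unfolding L13_def
      by (auto intro!: psd4_scale)
    ultimately show ?thesis using memK by (simp add: scaleR_add_right)
  qed
  have mem: "(W, -t) \<in> K"
  proof (rule ccontr)
    assume "(W, -t) \<notin> K"
    from separating_hyperplane_closed_point[OF cvK cK this]
    obtain a b where ab: "inner a (W, -t) < b" "\<forall>x\<in>K. b < inner a x" by blast
    have b0: "b < 0" using ab(2) K0 by force
    have pos: "0 \<le> inner a x" if "x \<in> K" for x
    proof (rule ccontr)
      assume "\<not> 0 \<le> inner a x"
      then have neg: "inner a x < 0" by simp
      define c where "c = 2 * b / inner a x"
      have "0 \<le> c" unfolding c_def using neg b0 by (intro divide_nonpos_neg) auto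
      then have "b < inner a (c *\<^sub>R x)" using ab(2) Kscale[OF that] by blast
      also have "inner a (c *\<^sub>R x) = 2 * b" unfolding c_def using neg by simp
      finally show False using b0 by simp
    qed
    obtain Rm r where a: "a = (Rm, r)" by (cases a)
    have neg: "inner Rm W - r * t < 0" using ab(1) b0 unfolding a by (simp add: inner_commute)
    have inK1: "(A, 0) \<in> K" if "psd4 A" for A
    proof -
      have "(0,0) \<in> L2" by (rule L2_0)
      moreover have "(A, 0) \<in> L13" unfolding L13_def using that by simp
      ultimately show ?thesis using memK by fastforce
    qed
    have inK2: "(Y, 2 * inner G Y) \<in> K" if "psd4 Y" for Y
    proof -
      have "(Y, 2 * inner G Y) \<in> L2" unfolding L2_def using that by simp
      moreover have "(0, 0) \<in> L13" by (rule L13_0)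
      ultimately show ?thesis using memK by fastforce
    qed
    have inK3: "(0, 1) \<in> K"
    proof -
      have "(0, 1) \<in> L13" unfolding L13_def by (simp add: psd4_0)
      then show ?thesis using L2_0 memK by fastforce
    qed
    have r0: "0 \<le> r" using pos[OF inK3] unfolding a by simp
    have q1: "0 \<le> v \<bullet> (Rm *v v)" for v
      using pos[OF inK1[OF psd4_outerv[of v]]] unfolding a by (simp add: inner_outerv)
    have q2: "0 \<le> v \<bullet> (Rm *v v) + 2 * r * (v \<bullet> (G *v v))" for v
      using pos[OF inK2[OF psd4_outerv[of v]]] unfolding a by (simp add: inner_outerv)
    define Rs where "Rs = (1/2) *\<^sub>R (Rm + transpose Rm)"
    have sRs: "transpose Rs = Rs" unfolding Rs_def by (simp add: transpose_scalar transpose_add add.commute)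
    have qRs: "v \<bullet> (Rs *v v) = v \<bullet> (Rm *v v)" for v
      unfolding Rs_def
      by (simp add: scaleR_matrix_vector_assoc[symmetric] matrix_vector_mult_add_rdistrib inner_add_right quad_vmul)
    have iRs: "inner W Rs = inner Rm W"
      unfolding Rs_def by (simp add: inner_add_right inner_transpose symW inner_commute)
    show False
    proof (cases "r = 0")
      case False
      then have rpos: "0 < r" using r0 by simp
      define R where "R = (1/r) *\<^sub>R Rs"
      have "psd4 R" unfolding psd4_def R_def
        using sRs q1 qRs rpos
        by (simp add: transpose_scalar scaleR_matrix_vector_assoc[symmetric])
      moreover have "psd4 (R + 2 *\<^sub>R G)" unfolding psd4_def
      proof
        show "transpose (R + 2 *\<^sub>R G) = R + 2 *\<^sub>R G"
          unfolding R_def by (simp add: transpose_add transpose_scalar sRs symG)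
        show "\<forall>v. 0 \<le> v \<bullet> ((R + 2 *\<^sub>R G) *v v)"
        proof
          fix v :: "real^4"
          have "v \<bullet> ((R + 2 *\<^sub>R G) *v v) = (1/r) * (v \<bullet> (Rm *v v) + 2 * r * (v \<bullet> (G *v v)))"
            unfolding R_def using rpos
            by (simp add: matrix_vector_mult_add_rdistrib inner_add_right
                scaleR_matrix_vector_assoc[symmetric] qRs field_simps)
          then show "0 \<le> v \<bullet> ((R + 2 *\<^sub>R G) *v v)" using q2[of v] rpos by simp
        qed
      qed
      ultimately have "R \<in> Rset G" unfolding Rset_def by blast
      then have "t \<le> inner W R" using bound by blast
      also have "inner W R = inner Rm W / r" unfolding R_def using iRs by simp
      finally have "t * r \<le> inner Rm W" using rpos by (simp add: field_simps)
      then show False using neg by (simp add: algebra_simps)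
    next
      case True
      have negRs: "inner W Rs < 0" using neg True iRs by simp
      have pRs: "psd4 Rs" unfolding psd4_def using sRs q1 qRs by simp
      obtain R0 where R0: "R0 \<in> Rset G" using Rset_nonempty[OF symG] by blast
      define c where "c = (\<bar>inner W R0\<bar> + \<bar>t\<bar> + 1) / (- inner W Rs)"
      have c0: "0 \<le> c" unfolding c_def using negRs by (intro divide_nonneg_pos) auto
      have "R0 + c *\<^sub>R Rs \<in> Rset G"
      proof -
        have "psd4 (R0 + c *\<^sub>R Rs)" using R0 pRs c0 unfolding Rset_def by (auto intro!: psd4_add psd4_scale)
        moreover have "psd4 ((R0 + c *\<^sub>R Rs) + 2 *\<^sub>R G)"
        proof -
          have "(R0 + c *\<^sub>R Rs) + 2 *\<^sub>R G = (R0 + 2 *\<^sub>R G) + c *\<^sub>R Rs" by (simp add: algebra_simps)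
          moreover have "psd4 ((R0 + 2 *\<^sub>R G) + c *\<^sub>R Rs)"
            using R0 pRs c0 unfolding Rset_def by (intro psd4_add[of "R0 + 2 *\<^sub>R G"] psd4_scale) auto
          ultimately show ?thesis by metis
        qed
        ultimately show ?thesis unfolding Rset_def by blast
      qed
      then have "t \<le> inner W (R0 + c *\<^sub>R Rs)" using bound by blast
      also have "inner W (R0 + c *\<^sub>R Rs) = inner W R0 + c * inner W Rs" by (simp add: inner_add_right)
      also have "c * inner W Rs = - (\<bar>inner W R0\<bar> + \<bar>t\<bar> + 1)" unfolding c_def using negRs by simp
      finally show False by linarith
    qed
  qed
  then obtain p q where pq: "(W, -t) = p + q" "p \<in> L2" "q \<in> L13" unfolding K_def by blast
  obtain Y s where p: "p = (Y, s)" by (cases p)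
  obtain A s' where q: "q = (A, s')" by (cases q)
  have "psd4 Y" "s = 2 * inner G Y" using pq(2) unfolding p L2_def by auto
  moreover have "psd4 A" "0 \<le> s'" using pq(3) unfolding q L13_def by auto
  moreover have "W = Y + A" "-t = s + s'" using pq(1) unfolding p q by auto
  ultimately show ?thesis by (intro exI[of _ Y]) auto
qed

fun Csum :: "(nat \<Rightarrow> real^4^4) \<Rightarrow> nat \<Rightarrow> (real^4^4) set" where
  "Csum G 0 = {M. psd4 M}"
| "Csum G (Suc n) = {a + b | a b. a \<in> Csum G n \<and> b \<in> Rset (G (Suc n))}"

lemma Rset_psd: "R \<in> Rset G \<Longrightarrow> psd4 R"
  unfolding Rset_def by simp

lemma Csum_psd: "M \<in> Csum G n \<Longrightarrow> psd4 M"
  by (induction n arbitrary: M) (auto intro!: psd4_add dest: Rset_psd)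

lemma closed_Rset: "closed (Rset G)"
proof -
  have "Rset G = {R. psd4 R} \<inter> (\<lambda>R. R + 2 *\<^sub>R G) -` {R. psd4 R}"
    unfolding Rset_def by auto
  moreover have "closed ((\<lambda>R. R + 2 *\<^sub>R G) -` {R. psd4 R})"
    by (intro continuous_closed_vimage closed_psd4 continuous_intros)
  ultimately show ?thesis using closed_psd4 by auto
qed

lemma convex_Rset: "convex (Rset G)"
  unfolding convex_def
proof (intro ballI allI impI)
  fix x y :: "real^4^4" and u v :: real
  assume x: "x \<in> Rset G" and y: "y \<in> Rset G" and u: "0 \<le> u" and v: "0 \<le> v" and uv: "u + v = 1"
  have "psd4 (u *\<^sub>R x + v *\<^sub>R y)" using x y u v unfolding Rset_def by (auto intro!: psd4_add psd4_scale)
  moreover have "u *\<^sub>R x + v *\<^sub>R y + 2 *\<^sub>R G = u *\<^sub>R (x + 2 *\<^sub>R G) + v *\<^sub>R (y + 2 *\<^sub>R G)"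
  proof -
    have "(u + v) *\<^sub>R (2 *\<^sub>R G) = 2 *\<^sub>R G" using uv by simp
    then have "u *\<^sub>R (2 *\<^sub>R G) + v *\<^sub>R (2 *\<^sub>R G) = 2 *\<^sub>R G" by (simp only: scaleR_add_left)
    then show ?thesis by (simp add: scaleR_add_right algebra_simps)
  qed
  moreover have "psd4 (u *\<^sub>R (x + 2 *\<^sub>R G) + v *\<^sub>R (y + 2 *\<^sub>R G))"
    using x y u v unfolding Rset_def by (intro psd4_add[of "u *\<^sub>R (x + 2 *\<^sub>R G)"] psd4_scale) auto
  ultimately show "u *\<^sub>R x + v *\<^sub>R y \<in> Rset G" unfolding Rset_def by simp
qed

lemma Csum_closed: "closed (Csum G n)"
proof (induction n)
  case 0 then show ?case using closed_psd4 by simp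
next
  case (Suc n)
  define f where "f = (\<lambda>M::real^4^4. 16 * inner M (mat 1))"
  have lin: "linear f" unfolding f_def by (intro linearI) (simp_all add: inner_add_left algebra_simps)
  have "\<forall>a\<in>Csum G n. norm a \<le> f a"
  proof
    fix a assume "a \<in> Csum G n"
    then have "psd4 a" by (rule Csum_psd)
    then show "norm a \<le> f a" unfolding f_def using psd4_norm_bound[of a] by (simp add: trace_inner)
  qed
  moreover have "\<forall>b\<in>Rset (G (Suc n)). 0 \<le> f b"
  proof
    fix a assume "a \<in> Rset (G (Suc n))"
    then have "psd4 a" by (rule Rset_psd)
    then show "0 \<le> f a" unfolding f_def using psd4_trace[of a] by (simp add: trace_inner)
  qed
  ultimately show ?case using closed_sum_bounded[OF Suc.IH closed_Rset lin] by simp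
qed

lemma Csum_convex: "convex (Csum G n)"
proof (induction n)
  case 0 then show ?case using convex_psd4 by simp
next
  case (Suc n)
  show ?case unfolding Csum.simps convex_def
  proof (intro ballI allI impI)
    fix x y :: "real^4^4" and u v :: real
    assume "x \<in> {a + b |a b. a \<in> Csum G n \<and> b \<in> Rset (G (Suc n))}"
      "y \<in> {a + b |a b. a \<in> Csum G n \<and> b \<in> Rset (G (Suc n))}"
      and uv: "0 \<le> u" "0 \<le> v" "u + v = 1"
    then obtain a1 b1 a2 b2 where x: "x = a1 + b1" "a1 \<in> Csum G n" "b1 \<in> Rset (G (Suc n))"
      and y: "y = a2 + b2" "a2 \<in> Csum G n" "b2 \<in> Rset (G (Suc n))" by blast
    have "u *\<^sub>R x + v *\<^sub>R y = (u *\<^sub>R a1 + v *\<^sub>R a2) + (u *\<^sub>R b1 + v *\<^sub>R b2)"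
      unfolding x y by (simp add: algebra_simps)
    moreover have "u *\<^sub>R a1 + v *\<^sub>R a2 \<in> Csum G n"
      using Suc.IH x(2) y(2) uv unfolding convex_def by blast
    moreover have "u *\<^sub>R b1 + v *\<^sub>R b2 \<in> Rset (G (Suc n))"
      using convex_Rset x(3) y(3) uv unfolding convex_def by blast
    ultimately show "u *\<^sub>R x + v *\<^sub>R y \<in> {a + b |a b. a \<in> Csum G n \<and> b \<in> Rset (G (Suc n))}" by blast
  qed
qed

lemma Csum_nonempty: "(\<forall>i. transpose (G i) = G i) \<Longrightarrow> \<exists>x. x \<in> Csum G n"
proof (induction n)
  case 0 then show ?case using psd4_0 by auto
next
  case (Suc n)
  then obtain x where "x \<in> Csum G n" by blast
  moreover obtain r where "r \<in> Rset (G (Suc n))" using Rset_nonempty Suc.prems by blast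
  ultimately show ?case by auto
qed

lemma Csum_plus_psd: "M \<in> Csum G n \<Longrightarrow> psd4 P \<Longrightarrow> M + P \<in> Csum G n"
proof (induction n arbitrary: M)
  case 0 then show ?case by (simp add: psd4_add)
next
  case (Suc n)
  then obtain a b where "M = a + b" "a \<in> Csum G n" "b \<in> Rset (G (Suc n))" by auto
  moreover have "a + P \<in> Csum G n" using Suc.IH[OF \<open>a \<in> Csum G n\<close> Suc.prems(2)] .
  moreover have "M + P = (a + P) + b" using \<open>M = a + b\<close> by (simp add: algebra_simps)
  ultimately show ?case unfolding Csum.simps by blast
qed

lemma Csum_extract:
  "M \<in> Csum G n \<Longrightarrow> \<exists>R P. psd4 P \<and> (\<forall>i\<in>{1..n}. R i \<in> Rset (G i)) \<and> M = P + (\<Sum>i=1..n. R i)"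
proof (induction n arbitrary: M)
  case 0 then show ?case by auto
next
  case (Suc n)
  then obtain a b where ab: "M = a + b" "a \<in> Csum G n" "b \<in> Rset (G (Suc n))" by auto
  from Suc.IH[OF ab(2)] obtain R P where RP: "psd4 P" "\<forall>i\<in>{1..n}. R i \<in> Rset (G i)" "a = P + (\<Sum>i=1..n. R i)"
    by blast
  define R' where "R' = R(Suc n := b)"
  have "\<forall>i\<in>{1..Suc n}. R' i \<in> Rset (G i)" using RP(2) ab(3) unfolding R'_def by (auto simp: le_Suc_eq)
  moreover have "(\<Sum>i=1..Suc n. R' i) = (\<Sum>i=1..n. R i) + b"
    unfolding R'_def by (simp add: sum.cl_ivl_Suc)
  moreover have "(\<Sum>i=1..n. R' i) = (\<Sum>i=1..n. R i)" unfolding R'_def by (intro sum.cong) auto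
  ultimately show ?case using RP(1) ab(1) RP(3)
    by (intro exI[of _ R'] exI[of _ P]) (simp add: sum.cl_ivl_Suc algebra_simps)
qed

lemma Csum_dual_bound:
  assumes symG: "\<forall>i. transpose (G i) = G i" and symW: "transpose W = W"
  shows "(\<forall>M\<in>Csum G n. b \<le> inner W M) \<Longrightarrow>
    \<exists>Y. (\<forall>i\<in>{1..n}. psd4 (Y i) \<and> psd4 (W - Y i)) \<and> (\<Sum>i=1..n. 2 * inner (G i) (Y i)) \<le> -b"
proof (induction n arbitrary: b)
  case 0
  have "b \<le> inner W 0" using 0 psd4_0 by (simp del: inner_zero_right)
  then show ?case by simp
next
  case (Suc n)
  let ?T = "(\<lambda>r. inner W r) ` Rset (G (Suc n))"
  obtain x0 where x0: "x0 \<in> Csum G n" using Csum_nonempty[OF symG] by blast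
  obtain r0 where r0: "r0 \<in> Rset (G (Suc n))" using Rset_nonempty symG by blast
  have hyp: "b \<le> inner W x + inner W r" if "x \<in> Csum G n" "r \<in> Rset (G (Suc n))" for x r
    using Suc.prems that by (force simp: inner_add_right)
  have ne: "?T \<noteq> {}" using r0 by blast
  have bdd: "bdd_below ?T"
    unfolding bdd_below_def using hyp[OF x0] by (intro exI[of _ "b - inner W x0"]) force
  define t where "t = Inf ?T"
  have tl: "\<forall>R\<in>Rset (G (Suc n)). t \<le> inner W R"
    unfolding t_def using bdd by (auto intro!: cInf_lower)
  have "\<forall>M\<in>Csum G n. b - t \<le> inner W M"
  proof
    fix M assume "M \<in> Csum G n"
    have "b - inner W M \<le> t" unfolding t_def
      using ne hyp[OF \<open>M \<in> Csum G n\<close>] by (intro cInf_greatest) force+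
    then show "b - t \<le> inner W M" by simp
  qed
  from Suc.IH[OF this] obtain Y where
    Y: "\<forall>i\<in>{1..n}. psd4 (Y i) \<and> psd4 (W - Y i)" "(\<Sum>i=1..n. 2 * inner (G i) (Y i)) \<le> -(b - t)"
    by blast
  from inner_dual[OF spec[OF symG] symW tl] obtain Y' where
    Y': "psd4 Y'" "psd4 (W - Y')" "2 * inner (G (Suc n)) Y' \<le> -t" by blast
  define Y2 where "Y2 = Y(Suc n := Y')"
  have "\<forall>i\<in>{1..Suc n}. psd4 (Y2 i) \<and> psd4 (W - Y2 i)"
    using Y(1) Y' unfolding Y2_def by (auto simp: le_Suc_eq)
  moreover have "(\<Sum>i=1..n. 2 * inner (G i) (Y2 i)) = (\<Sum>i=1..n. 2 * inner (G i) (Y i))"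
    unfolding Y2_def by (intro sum.cong) auto
  ultimately show ?case using Y(2) Y'(3)
    by (intro exI[of _ Y2]) (simp add: sum.cl_ivl_Suc Y2_def)
qed

lemma trace_scaleR: "trace (c *\<^sub>R (A::real^'n^'n)) = c * trace A"
  by (simp add: trace_inner)

lemma trace_pos: "(\<forall>v. v \<noteq> 0 \<longrightarrow> 0 < v \<bullet> (W *v v)) \<Longrightarrow> 0 < trace (W::real^4^4)"
proof -
  assume pd: "\<forall>v. v \<noteq> 0 \<longrightarrow> 0 < v \<bullet> (W *v v)"
  have "0 < W$p$p" for p using pd[rule_format, of "axis p 1"] by (simp add: basis_quad axis_eq_0_iff)
  then show ?thesis unfolding trace_def by (simp add: sum_pos)
qed

lemma dual_exists:
  fixes G :: "nat \<Rightarrow> real^4^4" and mu :: real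
  assumes symG: "\<forall>i. transpose (G i) = G i"
    and primal: "\<And>W Y. transpose W = W \<Longrightarrow> (\<forall>v. v \<noteq> 0 \<longrightarrow> 0 < v \<bullet> (W *v v)) \<Longrightarrow> trace W = 1 \<Longrightarrow>
        (\<forall>i\<in>{1..n}. psd4 (Y i) \<and> psd4 (W - Y i)) \<Longrightarrow> mu \<le> (\<Sum>i=1..n. 2 * inner (G i) (Y i))"
  shows "\<exists>R P. psd4 P \<and> (\<forall>i\<in>{1..n}. R i \<in> Rset (G i)) \<and> (-mu) *\<^sub>R mat 1 = P + (\<Sum>i=1..n. R i)"
proof -
  define p where "p = (-mu) *\<^sub>R (mat 1 :: real^4^4)"
  have "p \<in> Csum G n"
  proof (rule ccontr)
    assume "p \<notin> Csum G n"
    from separating_hyperplane_closed_point[OF Csum_convex Csum_closed this]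
    obtain a b where ab: "inner a p < b" "\<forall>x\<in>Csum G n. b < inner a x" by blast
    obtain x0 where x0: "x0 \<in> Csum G n" using Csum_nonempty[OF symG] by blast
    define W0 where "W0 = (1/2) *\<^sub>R (a + transpose a)"
    have sW0: "transpose W0 = W0" unfolding W0_def by (simp add: transpose_scalar transpose_add add.commute)
    have iW0: "inner W0 x = inner a x" if "transpose x = x" for x
    proof -
      have "inner (transpose a) x = inner a x" using inner_transpose[of a x] that by simp
      then show ?thesis unfolding W0_def by (simp add: inner_add_left)
    qed
    have qW0: "v \<bullet> (W0 *v v) = inner a (outerv v v)" for v
      unfolding W0_def
      by (simp add: scaleR_matrix_vector_assoc[symmetric] matrix_vector_mult_add_rdistrib inner_add_right
          quad_vmul inner_outerv)
    have W0psd: "0 \<le> v \<bullet> (W0 *v v)" for v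
    proof (rule ccontr)
      assume "\<not> 0 \<le> v \<bullet> (W0 *v v)"
      then have neg: "inner a (outerv v v) < 0" using qW0 by simp
      define lam where "lam = (inner a x0 - b) / (- inner a (outerv v v))"
      have lam0: "0 \<le> lam" unfolding lam_def using neg ab(2) x0
        by (intro divide_nonneg_pos) (auto simp: less_imp_le)
      have "x0 + lam *\<^sub>R outerv v v \<in> Csum G n"
        using Csum_plus_psd[OF x0 psd4_scale[OF psd4_outerv lam0]] .
      then have "b < inner a (x0 + lam *\<^sub>R outerv v v)" using ab(2) by blast
      also have "\<dots> = inner a x0 + lam * inner a (outerv v v)" by (simp add: inner_add_right)
      also have "lam * inner a (outerv v v) = b - inner a x0" unfolding lam_def using neg by simp
      finally show False by simp
    qed
    have ap_b: "0 < b - inner a p" using ab(1) by simp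
    define \<delta> where "\<delta> = (b - inner a p) / (2 * (1 + 4 * \<bar>mu\<bar>))"
    have d0: "0 < \<delta>" unfolding \<delta>_def using ap_b by (intro divide_pos_pos) auto
    define W where "W = W0 + \<delta> *\<^sub>R mat 1"
    have sW: "transpose W = W" unfolding W_def by (simp add: transpose_add transpose_scalar sW0)
    have pd: "\<forall>v. v \<noteq> 0 \<longrightarrow> 0 < v \<bullet> (W *v v)"
    proof (intro allI impI)
      fix v :: "real^4" assume "v \<noteq> 0"
      have "v \<bullet> (W *v v) = v \<bullet> (W0 *v v) + \<delta> * (v \<bullet> v)"
        unfolding W_def by (simp add: matrix_vector_mult_add_rdistrib inner_add_right scaleR_matrix_vector_assoc[symmetric])
      moreover have "0 < v \<bullet> v" using \<open>v \<noteq> 0\<close> by simp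
      ultimately show "0 < v \<bullet> (W *v v)" using W0psd[of v] d0 by (simp add: add_nonneg_pos)
    qed
    have iW: "inner W x = inner W0 x + \<delta> * trace x" for x
      unfolding W_def by (simp add: inner_add_left inner_add_right trace_inner inner_commute[of _ x])
    have bnd: "\<forall>M\<in>Csum G n. b \<le> inner W M"
    proof
      fix M assume M: "M \<in> Csum G n"
      have ps: "psd4 M" using Csum_psd[OF M] .
      then have "transpose M = M" unfolding psd4_def by simp
      then have "inner W M = inner a M + \<delta> * trace M" using iW iW0 by simp
      moreover have "0 \<le> \<delta> * trace M" using d0 psd4_trace[OF ps] by simp
      moreover have "b < inner a M" using ab(2) M by blast
      ultimately show "b \<le> inner W M" by simp
    qed
    have tr4: "trace (mat 1 :: real^4^4) = 4" by (simp add: trace_I)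
    have Wp: "inner W p < b"
    proof -
      have "transpose p = p" unfolding p_def by (simp add: transpose_def vec_eq_iff mat_def)
      then have "inner W p = inner a p + \<delta> * trace p" using iW iW0 by simp
      also have "trace p = -mu * 4" unfolding p_def trace_scaleR tr4 by simp
      finally have e: "inner W p = inner a p + \<delta> * (- mu * 4)" .
      have "\<delta> * (- mu * 4) \<le> \<delta> * (4 * \<bar>mu\<bar>)" using d0 by (intro mult_left_mono) auto
      also have "\<delta> * (4 * \<bar>mu\<bar>) = (b - inner a p) * (4 * \<bar>mu\<bar> / (2 * (1 + 4 * \<bar>mu\<bar>)))"
        unfolding \<delta>_def by simp
      also have "\<dots> < (b - inner a p) * 1"
        using ap_b by (intro mult_strict_left_mono) (auto simp: field_simps)
      finally show ?thesis using e by simp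
    qed
    from Csum_dual_bound[OF symG sW bnd] obtain Y where
      Y: "\<forall>i\<in>{1..n}. psd4 (Y i) \<and> psd4 (W - Y i)" "(\<Sum>i=1..n. 2 * inner (G i) (Y i)) \<le> -b" by blast
    define \<tau> where "\<tau> = trace W"
    have t0: "0 < \<tau>" unfolding \<tau>_def using trace_pos[OF pd] .
    define Wn where "Wn = (1/\<tau>) *\<^sub>R W"
    define Yn where "Yn = (\<lambda>i. (1/\<tau>) *\<^sub>R Y i)"
    have "transpose Wn = Wn" unfolding Wn_def by (simp add: transpose_scalar sW)
    moreover have "\<forall>v. v \<noteq> 0 \<longrightarrow> 0 < v \<bullet> (Wn *v v)"
      using pd t0 unfolding Wn_def by (simp add: scaleR_matrix_vector_assoc[symmetric])
    moreover have "trace Wn = 1" unfolding Wn_def \<tau>_def using t0 \<tau>_def by (simp add: trace_scaleR)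
    moreover have "\<forall>i\<in>{1..n}. psd4 (Yn i) \<and> psd4 (Wn - Yn i)"
    proof
      fix i assume "i \<in> {1..n}"
      then have "psd4 (Y i)" "psd4 (W - Y i)" using Y(1) by auto
      moreover have "Wn - Yn i = (1/\<tau>) *\<^sub>R (W - Y i)" unfolding Wn_def Yn_def by (simp add: algebra_simps)
      ultimately show "psd4 (Yn i) \<and> psd4 (Wn - Yn i)" unfolding Yn_def using t0
        by (auto intro!: psd4_scale)
    qed
    ultimately have "mu \<le> (\<Sum>i=1..n. 2 * inner (G i) (Yn i))" by (rule primal)
    also have "\<dots> = (1/\<tau>) * (\<Sum>i=1..n. 2 * inner (G i) (Y i))"
      unfolding Yn_def by (simp add: sum_distrib_left)
    also have "\<dots> \<le> (1/\<tau>) * (-b)" using Y(2) t0 by (intro mult_left_mono) auto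
    finally have "mu * \<tau> \<le> -b" using t0 by (simp add: field_simps)
    moreover have "inner W p = - mu * \<tau>" unfolding p_def \<tau>_def by (simp add: trace_inner)
    ultimately show False using Wp by simp
  qed
  from Csum_extract[OF this] show ?thesis unfolding p_def .
qed

lemma sum_atMost_split0: "(\<Sum>a\<le>l. f a) = f 0 + (\<Sum>a=1..l. f (a::nat))"
proof -
  have "{..l} = insert 0 {1..l}" by auto
  then show ?thesis by simp
qed

lemma mv_sum: "(A::real^'n^'m) *v (\<Sum>i\<in>S. f i) = (\<Sum>i\<in>S. A *v f i)"
  by (induct S rule: infinite_finite_induct) (auto simp: matrix_vector_right_distrib)

lemma inv_sym:
  fixes W B :: "real^4^4"
  assumes sW: "transpose W = W" and WB: "W ** B = mat 1"
  shows "transpose B = B" "B ** W = mat 1"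
proof -
  show BW: "B ** W = mat 1" using WB matrix_left_right_inverse by blast
  have "transpose (B ** W) = mat 1" using BW by simp
  then have "W ** transpose B = mat 1" by (simp add: matrix_transpose_mul sW)
  then have "B ** (W ** transpose B) = B" by simp
  then show "transpose B = B" by (simp add: matrix_mul_assoc BW)
qed

lemma pd_inverse:
  fixes W :: "real^4^4"
  assumes sW: "transpose W = W" and pd: "\<forall>v. v \<noteq> 0 \<longrightarrow> 0 < v \<bullet> (W *v v)"
  shows "\<exists>B. W ** B = mat 1 \<and> B ** W = mat 1 \<and> transpose B = B"
proof -
  have "\<forall>x. W *v x = 0 \<longrightarrow> x = 0" using pd by (metis inner_zero_right less_irrefl)
  then obtain B where "B ** W = mat 1" using matrix_left_invertible_ker by blast
  then have WB: "W ** B = mat 1" using matrix_left_right_inverse by blast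
  show ?thesis using inv_sym[OF sW WB] WB by blast
qed

lemma diag_CS:
  fixes W B Y :: "real^4^4"
  assumes pY: "psd4 Y" and pWY: "psd4 (W - Y)" and WB: "W ** B = mat 1" and sB: "transpose B = B"
    and sW: "transpose W = W"
  shows "(Y *v x) \<bullet> (B *v (Y *v x)) \<le> x \<bullet> (Y *v x)"
proof -
  define a where "a = Y *v x"
  define c where "c = B *v a"
  have Wc: "W *v c = a" unfolding c_def by (simp add: matrix_vector_mul_assoc WB)
  have ca: "c \<bullet> a = a \<bullet> (B *v a)" unfolding c_def by (simp add: inner_commute)
  have ca0: "0 \<le> c \<bullet> a"
  proof -
    have "0 \<le> c \<bullet> (Y *v c) + c \<bullet> ((W - Y) *v c)" using pY pWY unfolding psd4_def by (simp add: add_nonneg_nonneg)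
    also have "\<dots> = c \<bullet> (W *v c)" by (simp add: matrix_vector_mult_diff_rdistrib inner_diff_right)
    finally show ?thesis using Wc by simp
  qed
  have "(c \<bullet> (Y *v x))^2 \<le> (c \<bullet> (Y *v c)) * (x \<bullet> (Y *v x))" by (rule psd_CS[OF pY])
  moreover have "c \<bullet> (Y *v c) \<le> c \<bullet> a"
  proof -
    have "0 \<le> c \<bullet> ((W - Y) *v c)" using pWY unfolding psd4_def by simp
    then show ?thesis using Wc by (simp add: matrix_vector_mult_diff_rdistrib inner_diff_right)
  qed
  moreover have "0 \<le> x \<bullet> (Y *v x)" using pY unfolding psd4_def by simp
  ultimately have "(c \<bullet> a)^2 \<le> (c \<bullet> a) * (x \<bullet> (Y *v x))"
    unfolding a_def by (meson mult_right_mono order_trans)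
  then have "c \<bullet> a \<le> x \<bullet> (Y *v x)"
    using ca0 by (cases "c \<bullet> a = 0") (auto simp: power2_eq_square \<open>0 \<le> x \<bullet> (Y *v x)\<close>)
  then show ?thesis using ca unfolding a_def by simp
qed

definition Wcomp :: "real^4^4 \<Rightarrow> real^4^4 \<Rightarrow> (nat \<Rightarrow> real^4^4) \<Rightarrow> nat \<Rightarrow> nat \<Rightarrow> real^4^4" where
  "Wcomp W B Y a b = (if a = 0 then (if b = 0 then W else Y b) else if b = 0 then Y a
     else Y a ** B ** Y b + (if a = b then Y a - Y a ** B ** Y a else 0))"

lemma completion:
  fixes W :: "real^4^4" and Y :: "nat \<Rightarrow> real^4^4"
  assumes sW: "transpose W = W" and pd: "\<forall>v. v \<noteq> 0 \<longrightarrow> 0 < v \<bullet> (W *v v)" and trW: "trace W = 1"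
    and Y: "\<forall>i\<in>{1..l}. psd4 (Y i) \<and> psd4 (W - Y i)"
  shows "\<exists>Wf. sdr_feasible l Wf \<and> Wf 0 0 = W \<and> (\<forall>i\<in>{1..l}. Wf 0 i = Y i \<and> Wf i 0 = Y i \<and> Wf i i = Y i)"
proof -
  obtain B where WB: "W ** B = mat 1" and BW: "B ** W = mat 1" and sB: "transpose B = B"
    using pd_inverse[OF sW pd] by blast
  have sY: "transpose (Y i) = Y i" if "i \<in> {1..l}" for i using Y that unfolding psd4_def by blast
  define Wf where "Wf = Wcomp W B Y"
  have diag: "Wf i i = Y i" if "1 \<le> i" for i using that unfolding Wf_def Wcomp_def by simp
  have sym: "block_sym l Wf"
    unfolding block_sym_def
  proof (intro allI impI)
    fix i j assume "i \<le> l" "j \<le> l"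
    show "Wf j i = transpose (Wf i j)"
    proof (cases "i = 0 \<or> j = 0 \<or> i = j")
      case True then show ?thesis using sW sY \<open>i \<le> l\<close> \<open>j \<le> l\<close> unfolding Wf_def Wcomp_def by auto
    next
      case False
      then have "i \<in> {1..l}" "j \<in> {1..l}" using \<open>i \<le> l\<close> \<open>j \<le> l\<close> by auto
      then show ?thesis using False sY[of i] sY[of j] sB unfolding Wf_def Wcomp_def
        by (simp add: matrix_transpose_mul matrix_mul_assoc)
    qed
  qed
  have psd: "0 \<le> (\<Sum>a\<le>l. \<Sum>b\<le>l. z a \<bullet> (Wf a b *v z b))" for z
  proof -
    define s where "s = (\<Sum>j=1..l. Y j *v z j)"
    define u where "u = z 0 + B *v s"
    define d where "d = (\<lambda>i. z i \<bullet> (Y i *v z i) - (Y i *v z i) \<bullet> (B *v (Y i *v z i)))"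
    have row0: "(\<Sum>b\<le>l. z 0 \<bullet> (Wf 0 b *v z b)) = z 0 \<bullet> (W *v z 0) + z 0 \<bullet> s"
      unfolding sum_atMost_split0 s_def by (simp add: Wf_def Wcomp_def inner_sum_right)
    have rowa: "(\<Sum>b\<le>l. z a \<bullet> (Wf a b *v z b)) = z a \<bullet> (Y a *v z 0)
        + (\<Sum>b=1..l. (Y a *v z a) \<bullet> (B *v (Y b *v z b))) + d a"
      if a: "a \<in> {1..l}" for a
    proof -
      have "(\<Sum>b=1..l. z a \<bullet> (Wf a b *v z b))
          = (\<Sum>b=1..l. (Y a *v z a) \<bullet> (B *v (Y b *v z b)) + (if a = b then d a else 0))"
      proof (rule sum.cong[OF refl])
        fix b assume b: "b \<in> {1..l}"
        have e1: "z a \<bullet> ((Y a ** B ** Y b) *v z b) = (Y a *v z a) \<bullet> (B *v (Y b *v z b))"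
          using sym_bilin[OF sY[OF a], of "z a" "B *v (Y b *v z b)"]
          by (simp add: matrix_vector_mul_assoc[symmetric] inner_commute)
        show "z a \<bullet> (Wf a b *v z b) = (Y a *v z a) \<bullet> (B *v (Y b *v z b)) + (if a = b then d a else 0)"
          using a b e1 unfolding Wf_def Wcomp_def d_def
          by (auto simp: matrix_vector_mult_add_rdistrib matrix_vector_mult_diff_rdistrib inner_add_right inner_diff_right)
      qed
      also have "\<dots> = (\<Sum>b=1..l. (Y a *v z a) \<bullet> (B *v (Y b *v z b))) + d a"
        using a by (simp add: sum.distrib)
      finally show ?thesis using a unfolding sum_atMost_split0 by (simp add: Wf_def Wcomp_def)
    qed
    have "(\<Sum>a\<le>l. \<Sum>b\<le>l. z a \<bullet> (Wf a b *v z b))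
        = z 0 \<bullet> (W *v z 0) + z 0 \<bullet> s + (\<Sum>a=1..l. z a \<bullet> (Y a *v z 0)
          + (\<Sum>b=1..l. (Y a *v z a) \<bullet> (B *v (Y b *v z b))) + d a)"
    proof -
      have "(\<Sum>a\<le>l. \<Sum>b\<le>l. z a \<bullet> (Wf a b *v z b))
          = (\<Sum>b\<le>l. z 0 \<bullet> (Wf 0 b *v z b)) + (\<Sum>a=1..l. \<Sum>b\<le>l. z a \<bullet> (Wf a b *v z b))"
        by (rule sum_atMost_split0)
      also have "(\<Sum>a=1..l. \<Sum>b\<le>l. z a \<bullet> (Wf a b *v z b)) = (\<Sum>a=1..l. z a \<bullet> (Y a *v z 0)
          + (\<Sum>b=1..l. (Y a *v z a) \<bullet> (B *v (Y b *v z b))) + d a)"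
        by (rule sum.cong[OF refl]) (rule rowa)
      finally show ?thesis unfolding row0 by simp
    qed
    also have "\<dots> = z 0 \<bullet> (W *v z 0) + 2 * (z 0 \<bullet> s) + s \<bullet> (B *v s) + (\<Sum>a=1..l. d a)"
    proof -
      have "(\<Sum>a=1..l. z a \<bullet> (Y a *v z 0)) = z 0 \<bullet> s"
        unfolding s_def inner_sum_right
        by (intro sum.cong refl) (metis sym_bilin sY inner_commute)
      moreover have "(\<Sum>a=1..l. \<Sum>b=1..l. (Y a *v z a) \<bullet> (B *v (Y b *v z b))) = s \<bullet> (B *v s)"
        unfolding s_def by (simp add: inner_sum_left inner_sum_right mv_sum) (rule sum.swap)
      ultimately show ?thesis by (simp add: sum.distrib)
    qed
    also have "z 0 \<bullet> (W *v z 0) + 2 * (z 0 \<bullet> s) + s \<bullet> (B *v s) = u \<bullet> (W *v u)"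
    proof -
      have WBs: "W *v (B *v s) = s" by (simp add: matrix_vector_mul_assoc WB)
      have "u \<bullet> (W *v u) = z 0 \<bullet> (W *v z 0) + z 0 \<bullet> s + (B *v s) \<bullet> (W *v z 0) + (B *v s) \<bullet> s"
        unfolding u_def by (simp add: matrix_vector_right_distrib inner_add_left inner_add_right WBs)
      moreover have "(B *v s) \<bullet> (W *v z 0) = z 0 \<bullet> s"
        using sym_bilin[OF sW, of "B *v s" "z 0"] WBs by simp
      moreover have "(B *v s) \<bullet> s = s \<bullet> (B *v s)" by (simp add: inner_commute)
      ultimately show ?thesis by simp
    qed
    finally have eq: "(\<Sum>a\<le>l. \<Sum>b\<le>l. z a \<bullet> (Wf a b *v z b)) = u \<bullet> (W *v u) + (\<Sum>a=1..l. d a)" .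
    have "0 \<le> u \<bullet> (W *v u)" using pd by (cases "u = 0") (auto simp: less_imp_le)
    moreover have "0 \<le> (\<Sum>a=1..l. d a)"
      unfolding d_def using Y diag_CS[OF _ _ WB sB sW] by (intro sum_nonneg) (simp add: diff_ge_0_iff_ge)
    ultimately show ?thesis using eq by simp
  qed
  have "block_psd l Wf" unfolding block_psd_def using sym psd by blast
  moreover have "\<forall>i\<in>{1..l}. Wf 0 i = Wf i i" using diag unfolding Wf_def Wcomp_def by auto
  moreover have "trace (Wf 0 0) = 1" using trW unfolding Wf_def Wcomp_def by simp
  ultimately show ?thesis unfolding sdr_feasible_def Wf_def Wcomp_def by auto
qed

definition bil :: "'i set \<Rightarrow> ('i \<Rightarrow> 'i \<Rightarrow> real) \<Rightarrow> ('i \<Rightarrow> real) \<Rightarrow> ('i \<Rightarrow> real) \<Rightarrow> real" where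
  "bil I W x y = (\<Sum>r\<in>I. \<Sum>s\<in>I. x r * W r s * y s)"

definition dlt :: "'i \<Rightarrow> 'i \<Rightarrow> real" where "dlt p = (\<lambda>r. if r = p then 1 else 0)"

lemma bil_add_left: "bil I W (\<lambda>r. x r + y r) z = bil I W x z + bil I W y z"
  unfolding bil_def by (simp add: algebra_simps sum.distrib)
lemma bil_add_right: "bil I W z (\<lambda>r. x r + y r) = bil I W z x + bil I W z y"
  unfolding bil_def by (simp add: algebra_simps sum.distrib)
lemma bil_scale_left: "bil I W (\<lambda>r. c * x r) z = c * bil I W x z"
  unfolding bil_def by (simp add: sum_distrib_left algebra_simps)
lemma bil_scale_right: "bil I W z (\<lambda>r. c * x r) = c * bil I W z x"
  unfolding bil_def by (simp add: sum_distrib_left algebra_simps)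
lemma bil_sym: "\<forall>p\<in>I. \<forall>q\<in>I. W p q = W q p \<Longrightarrow> bil I W x y = bil I W y x"
  unfolding bil_def by (subst sum.swap) (auto intro!: sum.cong simp: algebra_simps)
lemma bil_dlt_left: "finite I \<Longrightarrow> p \<in> I \<Longrightarrow> bil I W (dlt p) y = (\<Sum>s\<in>I. W p s * y s)"
proof -
  assume "finite I" "p \<in> I"
  have "bil I W (dlt p) y = (\<Sum>r\<in>I. if r = p then \<Sum>s\<in>I. W p s * y s else 0)"
    unfolding bil_def by (rule sum.cong) (auto simp: dlt_def)
  then show ?thesis using \<open>finite I\<close> \<open>p \<in> I\<close> by (simp add: sum.delta)
qed
lemma bil_dlt_dlt: "finite I \<Longrightarrow> p \<in> I \<Longrightarrow> q \<in> I \<Longrightarrow> bil I W (dlt p) (dlt q) = W p q"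
proof -
  assume a: "finite I" "p \<in> I" "q \<in> I"
  have "(\<Sum>s\<in>I. W p s * dlt q s) = (\<Sum>s\<in>I. if s = q then W p q else 0)"
    by (rule sum.cong) (auto simp: dlt_def)
  then show ?thesis using a by (simp add: bil_dlt_left sum.delta)
qed

lemma zero_diag_row:
  assumes fin: "finite I" and sym: "\<forall>p\<in>I. \<forall>q\<in>I. W p q = W q p"
    and psd: "\<forall>z. 0 \<le> bil I W z z" and p: "p \<in> I" and q: "q \<in> I" and d: "W p p = 0"
  shows "W p q = 0"
proof -
  have e: "bil I W (\<lambda>r. t * dlt p r + dlt q r) (\<lambda>r. t * dlt p r + dlt q r) = 2 * t * W p q + W q q" for t
    using fin p q d sym
    by (simp add: bil_add_left bil_add_right bil_scale_left bil_scale_right bil_dlt_dlt algebra_simps)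
  show ?thesis
  proof (rule ccontr)
    assume ne: "W p q \<noteq> 0"
    define t where "t = - (W q q + 1) / (2 * W p q)"
    have "0 \<le> 2 * t * W p q + W q q" using psd[rule_format, of "\<lambda>r. t * dlt p r + dlt q r"] e[of t] by simp
    also have "2 * t * W p q + W q q = -1" unfolding t_def using ne by (simp add: field_simps)
    finally show False by simp
  qed
qed

lemma psd_pair_trace:
  fixes S :: "'i \<Rightarrow> 'i \<Rightarrow> real"
  assumes fin: "finite I" and S: "\<forall>z. 0 \<le> bil I S z z"
  shows "\<forall>p\<in>I. \<forall>q\<in>I. W p q = W q p \<Longrightarrow> \<forall>z. 0 \<le> bil I W z z \<Longrightarrow> 0 \<le> (\<Sum>p\<in>I. \<Sum>q\<in>I. S p q * W p q)"
proof (induction "card {p\<in>I. W p p \<noteq> 0}" arbitrary: W rule: less_induct)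
  case less
  note sym = less.prems(1) and psd = less.prems(2)
  show ?case
  proof (cases "{p\<in>I. W p p \<noteq> 0} = {}")
    case True
    then have d0: "W p p = 0" if "p \<in> I" for p using that by auto
    have "W p q = 0" if "p \<in> I" "q \<in> I" for p q
      using zero_diag_row[OF fin sym psd that d0[OF that(1)]] .
    then show ?thesis by simp
  next
    case False
    then obtain p0 where p0: "p0 \<in> I" "W p0 p0 \<noteq> 0" by blast
    have "0 \<le> W p0 p0" using psd[rule_format, of "dlt p0"] bil_dlt_dlt[OF fin p0(1) p0(1), of W] by simp
    then have cpos: "0 < W p0 p0" using p0(2) by simp
    define c where "c = W p0 p0"
    define w where "w = (\<lambda>r. W p0 r)"
    define W' where "W' = (\<lambda>r s. W r s - w r * w s / c)"
    have sym': "\<forall>p\<in>I. \<forall>q\<in>I. W' p q = W' q p" unfolding W'_def using sym by (simp add: mult.commute)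
    have q': "bil I W' z z = bil I W z z - (\<Sum>r\<in>I. w r * z r)^2 / c" for z
    proof -
      have "bil I W' z z = (\<Sum>r\<in>I. \<Sum>s\<in>I. z r * W r s * z s - (w r * z r) * (w s * z s) / c)"
        unfolding bil_def W'_def by (intro sum.cong refl) (simp add: algebra_simps)
      also have "\<dots> = bil I W z z - (\<Sum>r\<in>I. \<Sum>s\<in>I. (w r * z r) * (w s * z s)) / c"
        unfolding bil_def by (simp add: sum_subtractf sum_divide_distrib)
      also have "(\<Sum>r\<in>I. \<Sum>s\<in>I. (w r * z r) * (w s * z s)) = (\<Sum>r\<in>I. w r * z r)^2"
        by (simp add: power2_eq_square sum_product)
      finally show ?thesis .
    qed
    have psd': "\<forall>z. 0 \<le> bil I W' z z"
    proof
      fix z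
      define \<alpha> where "\<alpha> = (\<Sum>r\<in>I. w r * z r) / c"
      define z' where "z' = (\<lambda>r. z r + (- \<alpha>) * dlt p0 r)"
      have bz: "bil I W (dlt p0) z = (\<Sum>r\<in>I. w r * z r)" using bil_dlt_left[OF fin p0(1)] unfolding w_def .
      define \<sigma> where "\<sigma> = (\<Sum>r\<in>I. w r * z r)"
      have bz2: "bil I W z (dlt p0) = \<sigma>" using bz bil_sym[OF sym, of z "dlt p0"] unfolding \<sigma>_def by simp
      have bdd: "bil I W (dlt p0) (dlt p0) = c" unfolding c_def by (rule bil_dlt_dlt[OF fin p0(1) p0(1)])
      have "bil I W z' z' = bil I W z z + (-\<alpha>) * bil I W z (dlt p0) + ((-\<alpha>) * bil I W (dlt p0) z
           + (-\<alpha>) * ((-\<alpha>) * bil I W (dlt p0) (dlt p0)))"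
        unfolding z'_def by (simp only: bil_add_left bil_add_right bil_scale_left bil_scale_right)
      also have "\<dots> = bil I W z z - 2 * \<alpha> * \<sigma> + \<alpha> * (\<alpha> * c)"
        using bz bz2 bdd unfolding \<sigma>_def by (simp add: algebra_simps)
      also have "\<alpha> * c = \<sigma>" unfolding \<alpha>_def \<sigma>_def using cpos c_def by simp
      also have "bil I W z z - 2 * \<alpha> * \<sigma> + \<alpha> * \<sigma> = bil I W z z - \<sigma>^2 / c"
        unfolding \<alpha>_def \<sigma>_def by (simp add: power2_eq_square)
      also have "\<dots> = bil I W' z z" unfolding q' \<sigma>_def ..
      finally show "0 \<le> bil I W' z z" using psd[rule_format, of z'] by simp
    qed
    have sub: "{p\<in>I. W' p p \<noteq> 0} \<subseteq> {p\<in>I. W p p \<noteq> 0} - {p0}"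
    proof
      fix r assume r: "r \<in> {p\<in>I. W' p p \<noteq> 0}"
      have "W' p0 p0 = 0" unfolding W'_def w_def c_def using cpos by simp
      then have "r \<noteq> p0" using r by auto
      moreover have "W r r \<noteq> 0"
      proof
        assume "W r r = 0"
        then have "W r p0 = 0" using zero_diag_row[OF fin sym psd _ p0(1)] r by blast
        then have "w r = 0" unfolding w_def using sym r p0(1) by auto
        then show False using r \<open>W r r = 0\<close> unfolding W'_def by simp
      qed
      ultimately show "r \<in> {p\<in>I. W p p \<noteq> 0} - {p0}" using r by auto
    qed
    have "card {p\<in>I. W' p p \<noteq> 0} < card {p\<in>I. W p p \<noteq> 0}"
    proof -
      have "card {p\<in>I. W' p p \<noteq> 0} \<le> card ({p\<in>I. W p p \<noteq> 0} - {p0})"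
        using sub fin by (intro card_mono) auto
      also have "\<dots> < card {p\<in>I. W p p \<noteq> 0}" using fin p0 by (intro card_Diff1_less) auto
      finally show ?thesis .
    qed
    from less.hyps[OF this sym' psd'] have ih: "0 \<le> (\<Sum>p\<in>I. \<Sum>q\<in>I. S p q * W' p q)" .
    have "(\<Sum>p\<in>I. \<Sum>q\<in>I. S p q * W p q) = (\<Sum>p\<in>I. \<Sum>q\<in>I. S p q * W' p q + (w p * S p q * w q) / c)"
      unfolding W'_def by (intro sum.cong refl) (simp add: algebra_simps)
    also have "\<dots> = (\<Sum>p\<in>I. \<Sum>q\<in>I. S p q * W' p q) + bil I S w w / c"
      unfolding bil_def by (simp add: sum.distrib sum_divide_distrib)
    finally have "(\<Sum>p\<in>I. \<Sum>q\<in>I. S p q * W p q) = (\<Sum>p\<in>I. \<Sum>q\<in>I. S p q * W' p q) + bil I S w w / c" .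
    moreover have "0 \<le> bil I S w w / c" using S cpos c_def by simp
    ultimately show ?thesis using ih by simp
  qed
qed

lemma arrow_sum:
  fixes l :: nat
  assumes z: "\<forall>a\<le>l. \<forall>b\<le>l. a \<noteq> 0 \<and> b \<noteq> 0 \<and> a \<noteq> b \<longrightarrow> f a b = 0"
  shows "(\<Sum>a\<le>l. \<Sum>b\<le>l. f a b) = f 0 0 + (\<Sum>i=1..l. f 0 i + f i 0 + f i i)"
proof -
  have row: "(\<Sum>b\<le>l. f a b) = f a 0 + f a a" if a: "a \<in> {1..l}" for a
  proof -
    have "(\<Sum>b=1..l. f a b) = (\<Sum>b=1..l. if b = a then f a a else 0)"
    proof (rule sum.cong[OF refl])
      fix b assume b: "b \<in> {1..l}"
      show "f a b = (if b = a then f a a else 0)"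
      proof (cases "b = a")
        case False
        have "a \<noteq> 0" "b \<noteq> 0" "a \<le> l" "b \<le> l" using a b by auto
        then show ?thesis using z[rule_format, of a b] False by simp
      qed simp
    qed
    also have "\<dots> = f a a" using a by (simp add: sum.delta)
    finally show ?thesis by (simp add: sum_atMost_split0)
  qed
  have "(\<Sum>a\<le>l. \<Sum>b\<le>l. f a b) = (\<Sum>b\<le>l. f 0 b) + (\<Sum>a=1..l. \<Sum>b\<le>l. f a b)" by (rule sum_atMost_split0)
  also have "(\<Sum>a=1..l. \<Sum>b\<le>l. f a b) = (\<Sum>a=1..l. f a 0 + f a a)" by (rule sum.cong[OF refl]) (rule row)
  also have "(\<Sum>b\<le>l. f 0 b) = f 0 0 + (\<Sum>i=1..l. f 0 i)" by (rule sum_atMost_split0)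
  finally show ?thesis by (simp add: sum.distrib algebra_simps)
qed

definition Gm :: "(nat \<Rightarrow> real^3) \<Rightarrow> (nat \<Rightarrow> real^3) \<Rightarrow> (nat \<Rightarrow> real) \<Rightarrow> nat \<Rightarrow> real^4^4" where
  "Gm y x c2 i = (1/2) *\<^sub>R (Qmat (y i) (x i) - c2 i *\<^sub>R mat 1)"

lemma Gm_sym: "transpose (Gm y x c2 i) = Gm y x c2 i"
  unfolding Gm_def by (simp add: transpose_scalar transpose_diff Qmat_sym)

lemma trace_zero: "trace (0::real^'n^'n) = 0"
  by (simp add: trace_def)

lemma trace_mul_inner: "trace ((A::real^'n^'n) ** B) = inner A (transpose B)"
  by (simp add: trace_def matrix_matrix_mult_def inner_mat transpose_def)

lemma inner_transpose_both: "inner (transpose A) (transpose B) = inner (A::real^'n^'m) B"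
  by (simp add: inner_transpose)

lemma trprod_bigQ:
  "block_trprod l (bigQ l y x c2) Wm = (\<Sum>i=1..l. trace (Gm y x c2 i ** Wm i 0) + trace (Gm y x c2 i ** Wm 0 i))"
proof -
  have "block_trprod l (bigQ l y x c2) Wm = (\<Sum>a\<le>l. \<Sum>b\<le>l. trace (bigQ l y x c2 a b ** Wm b a))"
    unfolding block_trprod_def ..
  also have "\<dots> = trace (bigQ l y x c2 0 0 ** Wm 0 0) + (\<Sum>i=1..l. trace (bigQ l y x c2 0 i ** Wm i 0)
      + trace (bigQ l y x c2 i 0 ** Wm 0 i) + trace (bigQ l y x c2 i i ** Wm i i))"
    by (rule arrow_sum) (auto simp: bigQ_def trace_zero)
  also have "\<dots> = (\<Sum>i=1..l. trace (Gm y x c2 i ** Wm i 0) + trace (Gm y x c2 i ** Wm 0 i))"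
    by (auto simp: bigQ_def Gm_def trace_zero intro!: sum.cong)
  finally show ?thesis .
qed

definition flat :: "(nat \<Rightarrow> nat \<Rightarrow> real^4^4) \<Rightarrow> nat \<times> 4 \<Rightarrow> nat \<times> 4 \<Rightarrow> real" where
  "flat A ap bq = A (fst ap) (fst bq) $ snd ap $ snd bq"

definition unflat :: "(nat \<times> 4 \<Rightarrow> real) \<Rightarrow> nat \<Rightarrow> real^4" where
  "unflat z a = (\<chi> p. z (a, p))"

lemma sum_prod_split: "(\<Sum>ap\<in>A \<times> B. F ap) = (\<Sum>a\<in>A. \<Sum>p\<in>B. F (a, p))"
  using sum.cartesian_product[of "\<lambda>a p. F (a, p)" B A] by (simp add: split_def)

lemma bil_flat:
  "bil ({..l} \<times> UNIV) (flat A) z z = (\<Sum>a\<le>l. \<Sum>b\<le>l. unflat z a \<bullet> (A a b *v unflat z b))"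
proof -
  have "bil ({..l} \<times> UNIV) (flat A) z z = (\<Sum>a\<le>l. \<Sum>p\<in>UNIV. \<Sum>b\<le>l. \<Sum>q\<in>UNIV. z (a,p) * A a b $ p $ q * z (b,q))"
    unfolding bil_def sum_prod_split flat_def by simp
  also have "\<dots> = (\<Sum>a\<le>l. \<Sum>b\<le>l. \<Sum>p\<in>UNIV. \<Sum>q\<in>UNIV. z (a,p) * A a b $ p $ q * z (b,q))"
    by (rule sum.cong[OF refl]) (rule sum.swap)
  also have "\<dots> = (\<Sum>a\<le>l. \<Sum>b\<le>l. unflat z a \<bullet> (A a b *v unflat z b))"
    by (simp add: inner_vec_def matrix_vector_mult_def unflat_def sum_distrib_left mult.assoc)
  finally show ?thesis .
qed

lemma sum_flat:
  "(\<Sum>ap\<in>{..l} \<times> UNIV. \<Sum>bq\<in>{..l} \<times> UNIV. flat S ap bq * flat W ap bq) = (\<Sum>a\<le>l. \<Sum>b\<le>l. inner (S a b) (W a b))"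
proof -
  have "(\<Sum>ap\<in>{..l} \<times> UNIV. \<Sum>bq\<in>{..l} \<times> UNIV. flat S ap bq * flat W ap bq)
      = (\<Sum>a\<le>l. \<Sum>p\<in>UNIV. \<Sum>b\<le>l. \<Sum>q\<in>UNIV. S a b $ p $ q * W a b $ p $ q)"
    unfolding sum_prod_split flat_def by simp
  also have "\<dots> = (\<Sum>a\<le>l. \<Sum>b\<le>l. \<Sum>p\<in>UNIV. \<Sum>q\<in>UNIV. S a b $ p $ q * W a b $ p $ q)"
    by (rule sum.cong[OF refl]) (rule sum.swap)
  also have "\<dots> = (\<Sum>a\<le>l. \<Sum>b\<le>l. inner (S a b) (W a b))"
    by (simp add: inner_mat)
  finally show ?thesis .
qed

lemma block_trace_nonneg:
  assumes S: "\<forall>z::nat \<Rightarrow> real^4. 0 \<le> (\<Sum>a\<le>l. \<Sum>b\<le>l. z a \<bullet> (S a b *v z b))"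
    and W: "block_psd l W"
  shows "0 \<le> (\<Sum>a\<le>l. \<Sum>b\<le>l. inner (S a b) (W a b))"
proof -
  let ?I = "{..l} \<times> (UNIV :: 4 set)"
  have fin: "finite ?I" by simp
  have S': "\<forall>z. 0 \<le> bil ?I (flat S) z z" using S by (simp add: bil_flat)
  have sym: "\<forall>p\<in>?I. \<forall>q\<in>?I. flat W p q = flat W q p"
  proof (intro ballI)
    fix ap bq assume ap: "ap \<in> ?I" and bq: "bq \<in> ?I"
    obtain a p where a: "ap = (a, p)" "a \<le> l" using ap by auto
    obtain b q where b: "bq = (b, q)" "b \<le> l" using bq by auto
    have "W b a = transpose (W a b)" using W a(2) b(2) unfolding block_psd_def block_sym_def by blast
    then show "flat W ap bq = flat W bq ap" unfolding a(1) b(1) flat_def by (simp add: transpose_def)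
  qed
  have psd: "\<forall>z. 0 \<le> bil ?I (flat W) z z" using W unfolding block_psd_def by (simp add: bil_flat)
  have "0 \<le> (\<Sum>ap\<in>?I. \<Sum>bq\<in>?I. flat S ap bq * flat W ap bq)"
    by (rule psd_pair_trace[OF fin S' sym psd])
  then show ?thesis unfolding sum_flat .
qed

lemma outer_trace_G: "trace (G ** outer_blocks om i j) = om j \<bullet> (G *v om i)"
  by (simp add: trace_def matrix_matrix_mult_def outer_blocks_def inner_vec_def matrix_vector_mult_def
      sum_distrib_left algebra_simps)

lemma outer_quad: "z a \<bullet> (outer_blocks om a b *v z b) = (z a \<bullet> om a) * (om b \<bullet> z b)"
  by (simp add: outer_blocks_def inner_vec_def matrix_vector_mult_def sum_distrib_left sum_distrib_right
      algebra_simps) (rule sum.swap)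

lemma sdr_feasible_outer:
  assumes "qcqp_feasible l om"
  shows "sdr_feasible l (outer_blocks om)"
proof -
  have sym: "block_sym l (outer_blocks om)"
    unfolding block_sym_def by (simp add: outer_blocks_def transpose_def mult.commute)
  have "0 \<le> (\<Sum>a\<le>l. \<Sum>b\<le>l. z a \<bullet> (outer_blocks om a b *v z b))" for z
  proof -
    have "(\<Sum>a\<le>l. \<Sum>b\<le>l. z a \<bullet> (outer_blocks om a b *v z b)) = (\<Sum>a\<le>l. z a \<bullet> om a) * (\<Sum>b\<le>l. om b \<bullet> z b)"
      by (simp add: outer_quad sum_product)
    also have "\<dots> = (\<Sum>a\<le>l. z a \<bullet> om a)^2" by (simp add: power2_eq_square inner_commute)
    finally show ?thesis by simp
  qed
  then show ?thesis using assms sym unfolding sdr_feasible_def qcqp_feasible_def block_psd_def by blast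
qed

lemma qcqp_struct:
  assumes "qcqp_feasible l om"
  shows "norm (om 0) = 1" "\<forall>i\<in>{1..l}. om i = 0 \<or> om i = om 0"
proof -
  have "trace (outer_blocks om 0 0) = om 0 \<bullet> om 0"
    by (simp add: trace_def outer_blocks_def inner_vec_def)
  then have "om 0 \<bullet> om 0 = 1" using assms unfolding qcqp_feasible_def by simp
  then show "norm (om 0) = 1" by (simp add: norm_eq_sqrt_inner)
  show "\<forall>i\<in>{1..l}. om i = 0 \<or> om i = om 0"
  proof
    fix i assume i: "i \<in> {1..l}"
    have eq: "outer_blocks om 0 i = outer_blocks om i i" using assms i unfolding qcqp_feasible_def by blast
    have e: "om 0 $ a * om i $ b = om i $ a * om i $ b" for a b
    proof -
      have "outer_blocks om 0 i $ a $ b = outer_blocks om i i $ a $ b" using eq by simp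
      then show ?thesis by (simp add: outer_blocks_def)
    qed
    show "om i = 0 \<or> om i = om 0"
    proof (cases "om i = 0")
      case False
      then have "\<exists>b. om i $ b \<noteq> 0" by (simp add: vec_eq_iff)
      then obtain b where b: "om i $ b \<noteq> 0" by blast
      have "om 0 $ a = om i $ a" for a using e[of a b] b by simp
      then show ?thesis by (simp add: vec_eq_iff)
    qed simp
  qed
qed

lemma relax_outer:
  "relax_obj l y x c2 (outer_blocks om) =
     (\<Sum>i=1..l. om 0 \<bullet> (Gm y x c2 i *v om i) + om i \<bullet> (Gm y x c2 i *v om 0)) + (\<Sum>i=1..l. c2 i)"
  unfolding relax_obj_def trprod_bigQ by (simp add: outer_trace_G)

lemma Gm_quad: "v \<bullet> (Gm y x c2 i *v v) = (1/2) * (v \<bullet> (Qmat (y i) (x i) *v v) - c2 i * (v \<bullet> v))"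
  unfolding Gm_def
  by (simp add: scaleR_matrix_vector_assoc[symmetric] matrix_vector_mult_diff_rdistrib inner_diff_right
      algebra_simps)

lemma sum_split_k: "k \<le> l \<Longrightarrow> (\<Sum>i=1..l. f i) = (\<Sum>i=1..k. f i) + (\<Sum>i=k+1..l. f (i::nat))"
proof -
  assume "k \<le> l"
  then have "{1..l} = {1..k} \<union> {k+1..l}" by auto
  moreover have "{1..k} \<inter> {k+1..l} = {}" by auto
  ultimately show ?thesis by (simp add: sum.union_disjoint)
qed

lemma tls_w0_value:
  assumes k_le: "k \<le> l"
    and inliers: "\<forall>i\<in>{1..k}. w0 \<bullet> (Qmat (y i) (x i) *v w0) \<le> c2 i"
    and outliers: "\<forall>j\<in>{k+1..l}. w0 \<bullet> (Qmat (y j) (x j) *v w0) \<ge> c2 j"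
  shows "tls_obj l y x c2 w0 = (\<Sum>i=1..k. w0 \<bullet> (Qmat (y i) (x i) *v w0) - c2 i) + (\<Sum>i=1..l. c2 i)"
proof -
  have "tls_obj l y x c2 w0 = (\<Sum>i=1..k. min (w0 \<bullet> (Qmat (y i) (x i) *v w0)) (c2 i))
      + (\<Sum>i=k+1..l. min (w0 \<bullet> (Qmat (y i) (x i) *v w0)) (c2 i))"
    unfolding tls_obj_def using sum_split_k[OF k_le] .
  also have "(\<Sum>i=1..k. min (w0 \<bullet> (Qmat (y i) (x i) *v w0)) (c2 i)) = (\<Sum>i=1..k. w0 \<bullet> (Qmat (y i) (x i) *v w0))"
    using inliers by (intro sum.cong) auto
  also have "(\<Sum>i=k+1..l. min (w0 \<bullet> (Qmat (y i) (x i) *v w0)) (c2 i)) = (\<Sum>i=k+1..l. c2 i)"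
    using outliers by (intro sum.cong) auto
  also have "(\<Sum>i=1..l. c2 i) = (\<Sum>i=1..k. c2 i) + (\<Sum>i=k+1..l. c2 i)" using sum_split_k[OF k_le] .
  ultimately show ?thesis by (simp add: sum_subtractf)
qed

lemma qcqp_lower:
  assumes k_le: "k \<le> l" and w0_min: "tls_global_min l y x c2 w0"
    and inliers: "\<forall>i\<in>{1..k}. w0 \<bullet> (Qmat (y i) (x i) *v w0) \<le> c2 i"
    and outliers: "\<forall>j\<in>{k+1..l}. w0 \<bullet> (Qmat (y j) (x j) *v w0) \<ge> c2 j"
    and feas: "qcqp_feasible l om"
  shows "(\<Sum>i=1..k. w0 \<bullet> (Qmat (y i) (x i) *v w0) - c2 i) + (\<Sum>i=1..l. c2 i) \<le> relax_obj l y x c2 (outer_blocks om)"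
proof -
  let ?o = "om 0"
  have no: "norm ?o = 1" and st: "\<forall>i\<in>{1..l}. om i = 0 \<or> om i = ?o" using qcqp_struct[OF feas] by auto
  have oo: "?o \<bullet> ?o = 1" using no by (simp add: norm_eq_1)
  have trm: "min (?o \<bullet> (Qmat (y i) (x i) *v ?o)) (c2 i) \<le> ?o \<bullet> (Gm y x c2 i *v om i) + om i \<bullet> (Gm y x c2 i *v ?o) + c2 i"
    if i: "i \<in> {1..l}" for i
  proof (cases "om i = 0")
    case True then show ?thesis by simp
  next
    case False
    then have "om i = ?o" using st i by blast
    then show ?thesis using oo by (simp add: Gm_quad)
  qed
  have "tls_obj l y x c2 w0 \<le> tls_obj l y x c2 ?o" using w0_min no unfolding tls_global_min_def by blast
  also have "\<dots> \<le> (\<Sum>i=1..l. ?o \<bullet> (Gm y x c2 i *v om i) + om i \<bullet> (Gm y x c2 i *v ?o) + c2 i)"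
    unfolding tls_obj_def by (intro sum_mono trm)
  also have "\<dots> = relax_obj l y x c2 (outer_blocks om)" unfolding relax_outer by (simp add: sum.distrib)
  finally show ?thesis using tls_w0_value[OF k_le inliers outliers] by simp
qed

definition omw :: "nat \<Rightarrow> real^4 \<Rightarrow> nat \<Rightarrow> real^4" where
  "omw k w0 i = (if i = 0 then w0 else if i \<le> k then w0 else 0)"

lemma omw_feasible:
  assumes "norm w0 = 1" shows "qcqp_feasible l (omw k w0)"
proof -
  have "outer_blocks (omw k w0) 0 i = outer_blocks (omw k w0) i i" if "i \<in> {1..l}" for i
    using that by (cases "i \<le> k") (simp_all add: omw_def outer_blocks_def)
  moreover have "trace (outer_blocks (omw k w0) 0 0) = w0 \<bullet> w0"
    by (simp add: omw_def outer_blocks_def trace_def inner_vec_def)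
  moreover have "w0 \<bullet> w0 = 1" using assms by (simp add: norm_eq_1)
  ultimately show ?thesis unfolding qcqp_feasible_def by simp
qed

lemma omw_value:
  assumes k_le: "k \<le> l" and nw: "norm w0 = 1"
  shows "relax_obj l y x c2 (outer_blocks (omw k w0)) = (\<Sum>i=1..k. w0 \<bullet> (Qmat (y i) (x i) *v w0) - c2 i) + (\<Sum>i=1..l. c2 i)"
proof -
  have ww: "w0 \<bullet> w0 = 1" using nw by (simp add: norm_eq_1)
  have "(\<Sum>i=1..l. omw k w0 0 \<bullet> (Gm y x c2 i *v omw k w0 i) + omw k w0 i \<bullet> (Gm y x c2 i *v omw k w0 0))
      = (\<Sum>i=1..k. omw k w0 0 \<bullet> (Gm y x c2 i *v omw k w0 i) + omw k w0 i \<bullet> (Gm y x c2 i *v omw k w0 0))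
        + (\<Sum>i=k+1..l. omw k w0 0 \<bullet> (Gm y x c2 i *v omw k w0 i) + omw k w0 i \<bullet> (Gm y x c2 i *v omw k w0 0))"
    using sum_split_k[OF k_le] .
  also have "(\<Sum>i=k+1..l. omw k w0 0 \<bullet> (Gm y x c2 i *v omw k w0 i) + omw k w0 i \<bullet> (Gm y x c2 i *v omw k w0 0)) = 0"
    by (intro sum.neutral) (auto simp: omw_def)
  also have "(\<Sum>i=1..k. omw k w0 0 \<bullet> (Gm y x c2 i *v omw k w0 i) + omw k w0 i \<bullet> (Gm y x c2 i *v omw k w0 0))
      = (\<Sum>i=1..k. w0 \<bullet> (Qmat (y i) (x i) *v w0) - c2 i)"
    by (intro sum.cong) (auto simp: omw_def Gm_quad ww)
  finally show ?thesis unfolding relax_outer by simp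
qed

lemma adm_facts:
  assumes adm: "admissible_dual l D"
  shows "D 0 0 = 0"
    and "\<And>a b. a \<le> l \<Longrightarrow> b \<le> l \<Longrightarrow> a \<noteq> 0 \<Longrightarrow> b \<noteq> 0 \<Longrightarrow> a \<noteq> b \<Longrightarrow> D a b = 0"
    and "\<And>i. i \<in> {1..l} \<Longrightarrow> D i i = - (2 *\<^sub>R D 0 i)"
    and "\<And>i. i \<le> l \<Longrightarrow> D i 0 = transpose (D 0 i)"
    and "\<And>i. i \<in> {1..l} \<Longrightarrow> transpose (D 0 i) = D 0 i"
proof -
  have sym: "\<forall>i\<le>l. \<forall>j\<le>l. D j i = transpose (D i j)"
    using adm unfolding admissible_dual_def block_sym_def by blast
  have dg: "\<forall>i\<in>{1..l}. D i i + 2 *\<^sub>R D 0 i = 0"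
    using adm unfolding admissible_dual_def by blast
  have zr: "\<forall>i\<le>l. \<forall>j\<le>l. \<not> (1 \<le> i \<and> (j = i \<or> j = 0)) \<and> \<not> (i = 0 \<and> 1 \<le> j) \<longrightarrow> D i j = 0"
    using adm unfolding admissible_dual_def by blast
  show "D 0 0 = 0" using zr[rule_format, of 0 0] by simp
  show "\<And>a b. a \<le> l \<Longrightarrow> b \<le> l \<Longrightarrow> a \<noteq> 0 \<Longrightarrow> b \<noteq> 0 \<Longrightarrow> a \<noteq> b \<Longrightarrow> D a b = 0"
  proof -
    fix a b assume ab: "a \<le> l" "b \<le> l" "a \<noteq> 0" "b \<noteq> 0" "a \<noteq> b"
    then have "\<not> (1 \<le> a \<and> (b = a \<or> b = 0)) \<and> \<not> (a = 0 \<and> 1 \<le> b)" by auto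
    then show "D a b = 0" using zr ab(1,2) by blast
  qed
  show dii: "\<And>i. i \<in> {1..l} \<Longrightarrow> D i i = - (2 *\<^sub>R D 0 i)"
    using dg by (simp add: eq_neg_iff_add_eq_0)
  show "\<And>i. i \<le> l \<Longrightarrow> D i 0 = transpose (D 0 i)"
  proof -
    fix i assume "i \<le> l" then show "D i 0 = transpose (D 0 i)" using sym[rule_format, of 0 i] by simp
  qed
  show "\<And>i. i \<in> {1..l} \<Longrightarrow> transpose (D 0 i) = D 0 i"
  proof -
    fix i assume i: "i \<in> {1..l}"
    have "D i i = transpose (D i i)" using sym[rule_format, of i i] i by simp
    then have "- (2 *\<^sub>R D 0 i) = - (2 *\<^sub>R transpose (D 0 i))" using dii[OF i]
      by (simp add: transpose_scalar transpose_def vec_eq_iff)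
    then show "transpose (D 0 i) = D 0 i" by simp
  qed
qed

lemma transpose_quad_swap: "u \<bullet> (transpose M *v v) = v \<bullet> (M *v (u::real^'n))"
proof -
  have "u \<bullet> (transpose M *v v) = u \<bullet> (v v* M)" by simp
  also have "\<dots> = (v v* M) \<bullet> u" by (rule inner_commute)
  also have "\<dots> = v \<bullet> (M *v u)" by (rule dot_lmul_matrix)
  finally show ?thesis .
qed

lemma suff_bound:
  assumes adm: "admissible_dual l D"
    and O2: "\<forall>z :: nat \<Rightarrow> real^4.
          - mu * (norm (z 0))^2 + 2 * (\<Sum>i=1..l. z i \<bullet> (D 0 i *v z i))
          - (\<Sum>i=1..l. z 0 \<bullet> ((2 *\<^sub>R D 0 i - Qmat (y i) (x i) + c2 i *\<^sub>R mat 1) *v z i)) \<ge> 0"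
    and W: "sdr_feasible l W"
  shows "mu + (\<Sum>i=1..l. c2 i) \<le> relax_obj l y x c2 W"
proof -
  note D = adm_facts[OF adm]
  let ?G = "Gm y x c2"
  define S where "S a b = bigQ l y x c2 a b - D a b - (if a = 0 \<and> b = 0 then mu *\<^sub>R mat 1 else 0)" for a b
  have arrowS: "\<forall>a\<le>l. \<forall>b\<le>l. a \<noteq> 0 \<and> b \<noteq> 0 \<and> a \<noteq> b \<longrightarrow> S a b = 0"
    using D(2) by (auto simp: S_def bigQ_def)
  have S00: "S 0 0 = - (mu *\<^sub>R mat 1)" by (simp add: S_def bigQ_def D(1))
  have S0i: "S 0 i = ?G i - D 0 i" if "i \<in> {1..l}" for i using that by (simp add: S_def bigQ_def Gm_def)
  have Si0: "S i 0 = ?G i - transpose (D 0 i)" if "i \<in> {1..l}" for i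
    using that D(4)[of i] by (simp add: S_def bigQ_def Gm_def)
  have Sii: "S i i = 2 *\<^sub>R D 0 i" if "i \<in> {1..l}" for i using that D(3)[OF that] by (simp add: S_def bigQ_def)
  have quad: "0 \<le> (\<Sum>a\<le>l. \<Sum>b\<le>l. z a \<bullet> (S a b *v z b))" for z
  proof -
    have "(\<Sum>a\<le>l. \<Sum>b\<le>l. z a \<bullet> (S a b *v z b)) = z 0 \<bullet> (S 0 0 *v z 0)
        + (\<Sum>i=1..l. z 0 \<bullet> (S 0 i *v z i) + z i \<bullet> (S i 0 *v z 0) + z i \<bullet> (S i i *v z i))"
      by (rule arrow_sum) (simp add: arrowS)
    also have "\<dots> = - mu * (norm (z 0))^2 + 2 * (\<Sum>i=1..l. z i \<bullet> (D 0 i *v z i))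
          - (\<Sum>i=1..l. z 0 \<bullet> ((2 *\<^sub>R D 0 i - Qmat (y i) (x i) + c2 i *\<^sub>R mat 1) *v z i))"
    proof -
      have t: "z 0 \<bullet> (S 0 i *v z i) + z i \<bullet> (S i 0 *v z 0) + z i \<bullet> (S i i *v z i)
          = 2 * (z i \<bullet> (D 0 i *v z i)) - z 0 \<bullet> ((2 *\<^sub>R D 0 i - Qmat (y i) (x i) + c2 i *\<^sub>R mat 1) *v z i)"
        if i: "i \<in> {1..l}" for i
      proof -
        have g: "z i \<bullet> (?G i *v z 0) = z 0 \<bullet> (?G i *v z i)" using sym_bilin[OF Gm_sym] by blast
        have d0: "z i \<bullet> (transpose (D 0 i) *v z 0) = z 0 \<bullet> (D 0 i *v z i)" by (rule transpose_quad_swap)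
        then have d: "z i \<bullet> (z 0 v* D 0 i) = z 0 \<bullet> (D 0 i *v z i)" by simp
        have m: "2 *\<^sub>R D 0 i - Qmat (y i) (x i) + c2 i *\<^sub>R mat 1 = 2 *\<^sub>R D 0 i - 2 *\<^sub>R ?G i"
          unfolding Gm_def by (simp add: algebra_simps)
        show ?thesis unfolding S0i[OF i] Si0[OF i] Sii[OF i] m
          by (simp add: matrix_vector_mult_diff_rdistrib inner_diff_right scaleR_matrix_vector_assoc[symmetric] g d)
      qed
      have "(\<Sum>i=1..l. z 0 \<bullet> (S 0 i *v z i) + z i \<bullet> (S i 0 *v z 0) + z i \<bullet> (S i i *v z i))
          = (\<Sum>i=1..l. 2 * (z i \<bullet> (D 0 i *v z i)) - z 0 \<bullet> ((2 *\<^sub>R D 0 i - Qmat (y i) (x i) + c2 i *\<^sub>R mat 1) *v z i))"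
        by (rule sum.cong[OF refl]) (rule t)
      moreover have "z 0 \<bullet> (S 0 0 *v z 0) = - mu * (norm (z 0))^2"
      proof -
        have "S 0 0 = (-mu) *\<^sub>R mat 1" using S00 by simp
        then have "z 0 \<bullet> (S 0 0 *v z 0) = z 0 \<bullet> ((-mu) *\<^sub>R (mat 1 *v z 0))"
          by (simp only: scaleR_matrix_vector_assoc)
        then show ?thesis by (simp add: power2_norm_eq_inner)
      qed
      ultimately show ?thesis by (simp add: sum_subtractf sum_distrib_left)
    qed
    finally show ?thesis using O2 by simp
  qed
  have Wpsd: "block_psd l W" and W0i: "\<forall>i\<in>{1..l}. W 0 i = W i i" and trW: "trace (W 0 0) = 1"
    using W unfolding sdr_feasible_def by auto
  have Wsym: "\<And>i j. i \<le> l \<Longrightarrow> j \<le> l \<Longrightarrow> W j i = transpose (W i j)"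
    using Wpsd unfolding block_psd_def block_sym_def by blast
  have tr: "0 \<le> (\<Sum>a\<le>l. \<Sum>b\<le>l. inner (S a b) (W a b))" by (rule block_trace_nonneg[OF _ Wpsd]) (use quad in blast)
  have "(\<Sum>a\<le>l. \<Sum>b\<le>l. inner (S a b) (W a b)) = inner (S 0 0) (W 0 0)
      + (\<Sum>i=1..l. inner (S 0 i) (W 0 i) + inner (S i 0) (W i 0) + inner (S i i) (W i i))"
    by (rule arrow_sum) (simp add: arrowS)
  also have "\<dots> = - mu + (\<Sum>i=1..l. inner (?G i) (W 0 i) + inner (?G i) (W i 0))"
  proof -
    have "inner (S 0 0) (W 0 0) = - mu" using trW by (simp add: S00 trace_inner inner_commute)
    moreover have "inner (S 0 i) (W 0 i) + inner (S i 0) (W i 0) + inner (S i i) (W i i)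
        = inner (?G i) (W 0 i) + inner (?G i) (W i 0)" if i: "i \<in> {1..l}" for i
    proof -
      have w1: "W i 0 = transpose (W 0 i)" using Wsym[of 0 i] i by auto
      have w2: "W i i = transpose (W i i)" using Wsym[of i i] i by auto
      have "inner (transpose (D 0 i)) (W i 0) = inner (D 0 i) (W i i)"
        using w1 W0i i inner_transpose_both[of "D 0 i" "W 0 i"] by simp
      then show ?thesis unfolding S0i[OF i] Si0[OF i] Sii[OF i] using W0i i
        by (simp add: inner_diff_left)
    qed
    ultimately show ?thesis by simp
  qed
  also have "(\<Sum>i=1..l. inner (?G i) (W 0 i) + inner (?G i) (W i 0)) = block_trprod l (bigQ l y x c2) W"
  proof -
    have "inner (?G i) (W 0 i) + inner (?G i) (W i 0) = trace (?G i ** W i 0) + trace (?G i ** W 0 i)"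
      if i: "i \<in> {1..l}" for i
    proof -
      have "transpose (W i 0) = W 0 i" "transpose (W 0 i) = W i 0" using Wsym[of 0 i] Wsym[of i 0] i by auto
      then show ?thesis by (simp add: trace_mul_inner)
    qed
    then show ?thesis unfolding trprod_bigQ by (intro sum.cong) auto
  qed
  finally show ?thesis using tr unfolding relax_obj_def by simp
qed

lemma two_Gm: "2 *\<^sub>R Gm y x c2 i = Qmat (y i) (x i) - c2 i *\<^sub>R mat 1"
  by (simp add: Gm_def)

lemma nec_dual:
  fixes l k :: nat and y x :: "nat \<Rightarrow> real^3" and c2 :: "nat \<Rightarrow> real" and w0 :: "real^4" and mu :: real
  assumes k_le: "k \<le> l" and nw: "norm w0 = 1"
    and bound: "\<forall>W. sdr_feasible l W \<longrightarrow> mu + (\<Sum>i=1..l. c2 i) \<le> relax_obj l y x c2 W"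
    and mu_def: "mu = (\<Sum>i=1..k. w0 \<bullet> (Qmat (y i) (x i) *v w0) - c2 i)"
  shows "\<exists>D. admissible_dual l D \<and>
       (\<forall>i\<in>{1..k}. (2 *\<^sub>R D 0 i + Qmat (y i) (x i) - c2 i *\<^sub>R mat 1) *v w0 = 0) \<and>
       (\<forall>j\<in>{k+1..l}. (2 *\<^sub>R D 0 j + c2 j *\<^sub>R mat 1 - Qmat (y j) (x j)) *v w0 = 0) \<and>
       (\<forall>z :: nat \<Rightarrow> real^4.
          - mu * (norm (z 0))^2 + 2 * (\<Sum>i=1..l. z i \<bullet> (D 0 i *v z i))
          - (\<Sum>i=1..l. z 0 \<bullet> ((2 *\<^sub>R D 0 i - Qmat (y i) (x i) + c2 i *\<^sub>R mat 1) *v z i)) \<ge> 0)"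
proof -
  define G where "G = Gm y x c2"
  have symG: "\<forall>i. transpose (G i) = G i" unfolding G_def using Gm_sym by blast
  have primal: "mu \<le> (\<Sum>i=1..l. 2 * inner (G i) (Y i))"
    if sW: "transpose W = W" and pd: "\<forall>v. v \<noteq> 0 \<longrightarrow> 0 < v \<bullet> (W *v v)" and trW: "trace W = 1"
      and Y: "\<forall>i\<in>{1..l}. psd4 (Y i) \<and> psd4 (W - Y i)" for W Y
  proof -
    obtain Wf where Wf: "sdr_feasible l Wf" "\<forall>i\<in>{1..l}. Wf 0 i = Y i \<and> Wf i 0 = Y i \<and> Wf i i = Y i"
      using completion[OF sW pd trW Y] by blast
    have "relax_obj l y x c2 Wf = (\<Sum>i=1..l. 2 * inner (G i) (Y i)) + (\<Sum>i=1..l. c2 i)"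
    proof -
      have "trace (G i ** Wf i 0) + trace (G i ** Wf 0 i) = 2 * inner (G i) (Y i)" if i: "i \<in> {1..l}" for i
      proof -
        have "transpose (Y i) = Y i" using Y i unfolding psd4_def by blast
        then show ?thesis using Wf(2) i by (simp add: trace_mul_inner)
      qed
      then show ?thesis unfolding relax_obj_def trprod_bigQ G_def by (intro arg_cong2[where f="(+)"] sum.cong) auto
    qed
    then show ?thesis using bound[rule_format, OF Wf(1)] by linarith
  qed
  have "\<exists>R P. psd4 P \<and> (\<forall>i\<in>{1..l}. R i \<in> Rset (G i)) \<and> (-mu) *\<^sub>R mat 1 = P + (\<Sum>i=1..l. R i)"
    by (rule dual_exists[OF symG]) (rule primal, assumption+)
  then obtain R P where RP: "psd4 P" "\<forall>i\<in>{1..l}. R i \<in> Rset (G i)" "(-mu) *\<^sub>R mat 1 = P + (\<Sum>i=1..l. R i)"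
    by blast
  have Rpsd: "psd4 (R i)" and RGpsd: "psd4 (R i + 2 *\<^sub>R G i)" if "i \<in> {1..l}" for i
    using RP(2) that unfolding Rset_def by auto
  have symR: "transpose (R i) = R i" if "i \<in> {1..l}" for i using Rpsd[OF that] unfolding psd4_def by blast
  define B where "B i = G i + R i" for i
  have symB: "transpose (B i) = B i" if "i \<in> {1..l}" for i
    unfolding B_def using symG symR[OF that] by (simp add: transpose_add)
  define D where "D a b = (if a = 0 then (if b = 0 then 0 else B b) else if b = 0 then B a
      else if a = b then - (2 *\<^sub>R B a) else 0)" for a b
  have adm: "admissible_dual l D"
  proof -
    have "block_sym l D" unfolding block_sym_def
    proof (intro allI impI)
      fix i j assume ij: "i \<le> l" "j \<le> l"
      show "D j i = transpose (D i j)"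
      proof (cases "i = 0")
        case True then show ?thesis using symB ij by (cases "j = 0") (auto simp: D_def)
      next
        case False
        then have i1: "i \<in> {1..l}" using ij by auto
        then show ?thesis using symB[OF i1]
          by (cases "j = 0"; cases "j = i") (auto simp: D_def transpose_scalar transpose_def vec_eq_iff)
      qed
    qed
    moreover have "\<forall>i\<in>{1..l}. D i i + 2 *\<^sub>R D 0 i = 0" by (auto simp: D_def)
    moreover have "\<forall>i\<le>l. \<forall>j\<le>l. \<not> (1 \<le> i \<and> (j = i \<or> j = 0)) \<and> \<not> (i = 0 \<and> 1 \<le> j) \<longrightarrow> D i j = 0"
      by (auto simp: D_def)
    ultimately show ?thesis unfolding admissible_dual_def by blast
  qed
  have D0i: "D 0 i = B i" if "i \<in> {1..l}" for i using that by (simp add: D_def)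
  have m2: "2 *\<^sub>R D 0 i - Qmat (y i) (x i) + c2 i *\<^sub>R mat 1 = 2 *\<^sub>R R i" if "i \<in> {1..l}" for i
  proof -
    have "2 *\<^sub>R G i = Qmat (y i) (x i) - c2 i *\<^sub>R mat 1" unfolding G_def by (rule two_Gm)
    then show ?thesis using D0i[OF that] unfolding B_def by (simp add: algebra_simps)
  qed
  have Pz: "z0 \<bullet> (P *v z0) = - mu * (z0 \<bullet> z0) - (\<Sum>i=1..l. z0 \<bullet> (R i *v z0))" for z0
  proof -
    have "z0 \<bullet> (((-mu) *\<^sub>R mat 1) *v z0) = z0 \<bullet> ((P + (\<Sum>i=1..l. R i)) *v z0)" using RP(3) by simp
    moreover have "z0 \<bullet> (((-mu) *\<^sub>R mat 1) *v z0) = - mu * (z0 \<bullet> z0)"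
      by (simp only: scaleR_matrix_vector_assoc[symmetric]) simp
    moreover have "(\<Sum>i=1..l. R i) *v z0 = (\<Sum>i=1..l. R i *v z0)"
      by (induct l) (simp_all add: matrix_vector_mult_add_rdistrib)
    ultimately show ?thesis by (simp add: matrix_vector_mult_add_rdistrib inner_add_right inner_sum_right)
  qed
  have O2: "- mu * (norm (z 0))^2 + 2 * (\<Sum>i=1..l. z i \<bullet> (D 0 i *v z i))
          - (\<Sum>i=1..l. z 0 \<bullet> ((2 *\<^sub>R D 0 i - Qmat (y i) (x i) + c2 i *\<^sub>R mat 1) *v z i)) \<ge> 0" for z
  proof -
    have per: "2 * (z i \<bullet> (D 0 i *v z i)) - z 0 \<bullet> ((2 *\<^sub>R D 0 i - Qmat (y i) (x i) + c2 i *\<^sub>R mat 1) *v z i)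
        = z i \<bullet> ((R i + 2 *\<^sub>R G i) *v z i) + (z i - z 0) \<bullet> (R i *v (z i - z 0)) - z 0 \<bullet> (R i *v z 0)"
      if i: "i \<in> {1..l}" for i
    proof -
      have s: "z i \<bullet> (R i *v z 0) = z 0 \<bullet> (R i *v z i)" using sym_bilin[OF symR[OF i]] by blast
      have e: "z 0 \<bullet> ((2 *\<^sub>R D 0 i - Qmat (y i) (x i) + c2 i *\<^sub>R mat 1) *v z i) = 2 * (z 0 \<bullet> (R i *v z i))"
      proof -
        have "(2 *\<^sub>R D 0 i - Qmat (y i) (x i) + c2 i *\<^sub>R mat 1) *v z i = (2 *\<^sub>R R i) *v z i"
          using m2[OF i] by (rule arg_cong)
        also have "\<dots> = 2 *\<^sub>R (R i *v z i)" by (rule scaleR_matrix_vector_assoc[symmetric])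
        finally show ?thesis by (simp only: inner_scaleR_right)
      qed
      show ?thesis unfolding e unfolding D0i[OF i] B_def
        by (simp add: matrix_vector_mult_add_rdistrib matrix_vector_right_distrib matrix_vector_mult_diff_rdistrib
            inner_add_left inner_add_right inner_diff_left inner_diff_right scaleR_matrix_vector_assoc[symmetric]
            s algebra_simps)
    qed
    have "- mu * (norm (z 0))^2 + 2 * (\<Sum>i=1..l. z i \<bullet> (D 0 i *v z i))
          - (\<Sum>i=1..l. z 0 \<bullet> ((2 *\<^sub>R D 0 i - Qmat (y i) (x i) + c2 i *\<^sub>R mat 1) *v z i))
        = - mu * (z 0 \<bullet> z 0) + (\<Sum>i=1..l. 2 * (z i \<bullet> (D 0 i *v z i))
          - z 0 \<bullet> ((2 *\<^sub>R D 0 i - Qmat (y i) (x i) + c2 i *\<^sub>R mat 1) *v z i))"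
      by (simp add: sum_subtractf sum_distrib_left power2_norm_eq_inner)
    also have "\<dots> = - mu * (z 0 \<bullet> z 0) + (\<Sum>i=1..l. z i \<bullet> ((R i + 2 *\<^sub>R G i) *v z i)
          + (z i - z 0) \<bullet> (R i *v (z i - z 0)) - z 0 \<bullet> (R i *v z 0))"
      by (intro arg_cong2[where f="(+)"] refl sum.cong) (simp_all add: per)
    also have "\<dots> = z 0 \<bullet> (P *v z 0) + (\<Sum>i=1..l. z i \<bullet> ((R i + 2 *\<^sub>R G i) *v z i)
          + (z i - z 0) \<bullet> (R i *v (z i - z 0)))"
      unfolding Pz by (simp add: sum_subtractf)
    also have "0 \<le> \<dots>"
      using RP(1) Rpsd RGpsd unfolding psd4_def by (intro add_nonneg_nonneg sum_nonneg) auto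
    finally show ?thesis .
  qed
  have ww: "w0 \<bullet> w0 = 1" using nw by (simp add: norm_eq_1)
  define a1 where "a1 = (\<Sum>i=1..k. w0 \<bullet> ((R i + 2 *\<^sub>R G i) *v w0))"
  define a2 where "a2 = (\<Sum>i=k+1..l. w0 \<bullet> (R i *v w0))"
  define a3 where "a3 = w0 \<bullet> (P *v w0)"
  have a1nn: "0 \<le> w0 \<bullet> ((R i + 2 *\<^sub>R G i) *v w0)" if "i \<in> {1..k}" for i
    using RGpsd[of i] that k_le unfolding psd4_def by auto
  have a2nn: "0 \<le> w0 \<bullet> (R i *v w0)" if "i \<in> {k+1..l}" for i
    using Rpsd[of i] that unfolding psd4_def by auto
  have a3nn: "0 \<le> a3" using RP(1) unfolding a3_def psd4_def by auto
  have sum0: "a1 + a2 + a3 = 0"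
  proof -
    have "a3 = - mu - (\<Sum>i=1..k. w0 \<bullet> (R i *v w0)) - a2"
      unfolding a3_def a2_def Pz ww using sum_split_k[OF k_le, of "\<lambda>i. w0 \<bullet> (R i *v w0)"] by simp
    moreover have "a1 = (\<Sum>i=1..k. w0 \<bullet> (R i *v w0)) + (\<Sum>i=1..k. w0 \<bullet> (Qmat (y i) (x i) *v w0) - c2 i)"
    proof -
      have "w0 \<bullet> ((R i + 2 *\<^sub>R G i) *v w0) = w0 \<bullet> (R i *v w0) + (w0 \<bullet> (Qmat (y i) (x i) *v w0) - c2 i)" for i
      proof -
        have "2 *\<^sub>R G i = Qmat (y i) (x i) - c2 i *\<^sub>R mat 1" unfolding G_def by (rule two_Gm)
        then show ?thesis
          by (simp add: matrix_vector_mult_add_rdistrib inner_add_right matrix_vector_mult_diff_rdistrib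
              inner_diff_right scaleR_matrix_vector_assoc[symmetric] ww)
      qed
      then show ?thesis unfolding a1_def by (simp add: sum.distrib)
    qed
    ultimately show ?thesis using mu_def by simp
  qed
  have a1nn': "0 \<le> a1" unfolding a1_def using a1nn by (intro sum_nonneg) auto
  have a2nn': "0 \<le> a2" unfolding a2_def using a2nn by (intro sum_nonneg) auto
  have a10: "a1 = 0" and a20: "a2 = 0" using sum0 a1nn' a2nn' a3nn by linarith+
  have in0: "(R i + 2 *\<^sub>R G i) *v w0 = 0" if i: "i \<in> {1..k}" for i
  proof -
    have "w0 \<bullet> ((R i + 2 *\<^sub>R G i) *v w0) = 0"
      using a10 a1nn i unfolding a1_def by (subst (asm) sum_nonneg_eq_0_iff) auto
    then show ?thesis using psd_zero_quad RGpsd[of i] i k_le by auto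
  qed
  have out0: "R j *v w0 = 0" if j: "j \<in> {k+1..l}" for j
  proof -
    have "w0 \<bullet> (R j *v w0) = 0"
      using a20 a2nn j unfolding a2_def by (subst (asm) sum_nonneg_eq_0_iff) auto
    then show ?thesis using psd_zero_quad Rpsd[of j] j by auto
  qed
  have O1a: "\<forall>i\<in>{1..k}. (2 *\<^sub>R D 0 i + Qmat (y i) (x i) - c2 i *\<^sub>R mat 1) *v w0 = 0"
  proof
    fix i assume i: "i \<in> {1..k}"
    then have i': "i \<in> {1..l}" using k_le by auto
    have "2 *\<^sub>R G i = Qmat (y i) (x i) - c2 i *\<^sub>R mat 1" unfolding G_def by (rule two_Gm)
    then have q: "Qmat (y i) (x i) = 2 *\<^sub>R G i + c2 i *\<^sub>R mat 1" by (simp add: algebra_simps)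
    have "2 *\<^sub>R D 0 i + Qmat (y i) (x i) - c2 i *\<^sub>R mat 1 = 2 *\<^sub>R (R i + 2 *\<^sub>R G i)"
      unfolding q D0i[OF i'] B_def by (simp add: vec_eq_iff algebra_simps)
    then show "(2 *\<^sub>R D 0 i + Qmat (y i) (x i) - c2 i *\<^sub>R mat 1) *v w0 = 0"
      using in0[OF i] by (simp add: scaleR_matrix_vector_assoc[symmetric])
  qed
  have O1b: "\<forall>j\<in>{k+1..l}. (2 *\<^sub>R D 0 j + c2 j *\<^sub>R mat 1 - Qmat (y j) (x j)) *v w0 = 0"
  proof
    fix j assume j: "j \<in> {k+1..l}"
    then have j': "j \<in> {1..l}" by auto
    have "2 *\<^sub>R G j = Qmat (y j) (x j) - c2 j *\<^sub>R mat 1" unfolding G_def by (rule two_Gm)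
    then have q: "Qmat (y j) (x j) = 2 *\<^sub>R G j + c2 j *\<^sub>R mat 1" by (simp add: algebra_simps)
    have "2 *\<^sub>R D 0 j + c2 j *\<^sub>R mat 1 - Qmat (y j) (x j) = 2 *\<^sub>R R j"
      unfolding q D0i[OF j'] B_def by (simp add: algebra_simps)
    then show "(2 *\<^sub>R D 0 j + c2 j *\<^sub>R mat 1 - Qmat (y j) (x j)) *v w0 = 0"
      using out0[OF j] by (simp add: scaleR_matrix_vector_assoc[symmetric])
  qed
  show ?thesis using adm O1a O1b O2 by blast
qed

theorem proposition2p5:
  fixes l k :: nat and y x :: "nat \<Rightarrow> real^3" and c2 :: "nat \<Rightarrow> real" and w0 :: "real^4"
  assumes c2_nonneg: "\<forall>i\<in>{1..l}. c2 i \<ge> 0"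
    and k_le: "k \<le> l"
    and w0_min: "tls_global_min l y x c2 w0"
    and inliers: "\<forall>i\<in>{1..k}. w0 \<bullet> (Qmat (y i) (x i) *v w0) \<le> c2 i"
    and outliers: "\<forall>j\<in>{k+1..l}. w0 \<bullet> (Qmat (y j) (x j) *v w0) \<ge> c2 j"
  shows "sdr_tight l y x c2 \<longleftrightarrow>
    (\<exists>(mu::real) D. admissible_dual l D \<and>
       (\<forall>i\<in>{1..k}. (2 *\<^sub>R D 0 i + Qmat (y i) (x i) - c2 i *\<^sub>R mat 1) *v w0 = 0) \<and>
       (\<forall>j\<in>{k+1..l}. (2 *\<^sub>R D 0 j + c2 j *\<^sub>R mat 1 - Qmat (y j) (x j)) *v w0 = 0) \<and>
       (\<forall>z :: nat \<Rightarrow> real^4.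
          - mu * (norm (z 0))^2 + 2 * (\<Sum>i=1..l. z i \<bullet> (D 0 i *v z i))
          - (\<Sum>i=1..l. z 0 \<bullet> ((2 *\<^sub>R D 0 i - Qmat (y i) (x i) + c2 i *\<^sub>R mat 1) *v z i)) \<ge> 0) \<and>
       mu = (\<Sum>i=1..k. w0 \<bullet> (Qmat (y i) (x i) *v w0) - c2 i))"
proof -
  define mu0 where "mu0 = (\<Sum>i=1..k. w0 \<bullet> (Qmat (y i) (x i) *v w0) - c2 i)"
  have nw: "norm w0 = 1" using w0_min unfolding tls_global_min_def by blast
  show ?thesis
  proof
    assume "sdr_tight l y x c2"
    then obtain om where om: "qcqp_global_min l y x c2 om" "sdr_global_min l y x c2 (outer_blocks om)"
      unfolding sdr_tight_def by blast
    have lb: "mu0 + (\<Sum>i=1..l. c2 i) \<le> relax_obj l y x c2 (outer_blocks om)"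
      unfolding mu0_def
      using qcqp_lower[OF k_le w0_min inliers outliers] om(1) unfolding qcqp_global_min_def by blast
    have bound: "\<forall>W. sdr_feasible l W \<longrightarrow> mu0 + (\<Sum>i=1..l. c2 i) \<le> relax_obj l y x c2 W"
      using om(2) lb unfolding sdr_global_min_def by (meson order_trans)
    from nec_dual[OF k_le nw bound mu0_def] obtain D where
      "admissible_dual l D \<and>
       (\<forall>i\<in>{1..k}. (2 *\<^sub>R D 0 i + Qmat (y i) (x i) - c2 i *\<^sub>R mat 1) *v w0 = 0) \<and>
       (\<forall>j\<in>{k+1..l}. (2 *\<^sub>R D 0 j + c2 j *\<^sub>R mat 1 - Qmat (y j) (x j)) *v w0 = 0) \<and>
       (\<forall>z :: nat \<Rightarrow> real^4.
          - mu0 * (norm (z 0))^2 + 2 * (\<Sum>i=1..l. z i \<bullet> (D 0 i *v z i))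
          - (\<Sum>i=1..l. z 0 \<bullet> ((2 *\<^sub>R D 0 i - Qmat (y i) (x i) + c2 i *\<^sub>R mat 1) *v z i)) \<ge> 0)"
      by blast
    then show "\<exists>(mu::real) D. admissible_dual l D \<and>
       (\<forall>i\<in>{1..k}. (2 *\<^sub>R D 0 i + Qmat (y i) (x i) - c2 i *\<^sub>R mat 1) *v w0 = 0) \<and>
       (\<forall>j\<in>{k+1..l}. (2 *\<^sub>R D 0 j + c2 j *\<^sub>R mat 1 - Qmat (y j) (x j)) *v w0 = 0) \<and>
       (\<forall>z :: nat \<Rightarrow> real^4.
          - mu * (norm (z 0))^2 + 2 * (\<Sum>i=1..l. z i \<bullet> (D 0 i *v z i))
          - (\<Sum>i=1..l. z 0 \<bullet> ((2 *\<^sub>R D 0 i - Qmat (y i) (x i) + c2 i *\<^sub>R mat 1) *v z i)) \<ge> 0) \<and>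
       mu = (\<Sum>i=1..k. w0 \<bullet> (Qmat (y i) (x i) *v w0) - c2 i)"
      unfolding mu0_def by blast
  next
    assume "\<exists>(mu::real) D. admissible_dual l D \<and>
       (\<forall>i\<in>{1..k}. (2 *\<^sub>R D 0 i + Qmat (y i) (x i) - c2 i *\<^sub>R mat 1) *v w0 = 0) \<and>
       (\<forall>j\<in>{k+1..l}. (2 *\<^sub>R D 0 j + c2 j *\<^sub>R mat 1 - Qmat (y j) (x j)) *v w0 = 0) \<and>
       (\<forall>z :: nat \<Rightarrow> real^4.
          - mu * (norm (z 0))^2 + 2 * (\<Sum>i=1..l. z i \<bullet> (D 0 i *v z i))
          - (\<Sum>i=1..l. z 0 \<bullet> ((2 *\<^sub>R D 0 i - Qmat (y i) (x i) + c2 i *\<^sub>R mat 1) *v z i)) \<ge> 0) \<and>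
       mu = (\<Sum>i=1..k. w0 \<bullet> (Qmat (y i) (x i) *v w0) - c2 i)"
    then obtain mu D where adm: "admissible_dual l D"
      and O2: "\<forall>z :: nat \<Rightarrow> real^4.
          - mu * (norm (z 0))^2 + 2 * (\<Sum>i=1..l. z i \<bullet> (D 0 i *v z i))
          - (\<Sum>i=1..l. z 0 \<bullet> ((2 *\<^sub>R D 0 i - Qmat (y i) (x i) + c2 i *\<^sub>R mat 1) *v z i)) \<ge> 0"
      and O3: "mu = (\<Sum>i=1..k. w0 \<bullet> (Qmat (y i) (x i) *v w0) - c2 i)"
      by blast
    have bound: "mu + (\<Sum>i=1..l. c2 i) \<le> relax_obj l y x c2 W" if "sdr_feasible l W" for W
      using suff_bound[OF adm O2 that] .
    define om where "om = omw k w0"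
    have feas: "qcqp_feasible l om" unfolding om_def using omw_feasible[OF nw] .
    have val: "relax_obj l y x c2 (outer_blocks om) = mu + (\<Sum>i=1..l. c2 i)"
      unfolding om_def O3 using omw_value[OF k_le nw] .
    have "qcqp_global_min l y x c2 om"
      unfolding qcqp_global_min_def using feas val bound sdr_feasible_outer by simp
    moreover have "sdr_global_min l y x c2 (outer_blocks om)"
      unfolding sdr_global_min_def using sdr_feasible_outer[OF feas] val bound by simp
    ultimately show "sdr_tight l y x c2" unfolding sdr_tight_def by blast
  qed
qed

end
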